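(* Let $0<T\le\infty$, $\Delta=(0,T]$, let $\zeta_1,\zeta_2,\dots$ be i.i.d. non-negative random variables with distribution $G\in\mathcal S_\Delta$, $S_n=\zeta_1+\cdots+\zeta_n$, and for $x\ge0$ let $\eta(x)=\min\{n\ge1:S_n>x\}$ and $\chi(x)=S_{\eta(x)}-x$. Let $\tau$ be a non-negative integer-valued random variable independent of $\{\zeta_n\}$ with $\mathbf E(1+\delta)^\tau<\infty$ for some $\delta>0$. Then $$\mathbf P(\chi(x)\in y+\Delta,\ \eta(x)\le\tau)\sim\mathbf E\tau\cdot G(x+y+\Delta)\quad\text{as }\min(x,y)\to\infty.$$
   Context: $x+\Delta=(x,x+T]$. $G\in\mathcal L_\Delta$ means $G(x+\Delta)>0$ for all large $x$ and $G(x+t+\Delta)/G(x+\Delta)\to1$ as $x\to\infty$ uniformly in $t\in[0,1]$. A distribution $G$ on $[0,\infty)$ with unbounded support is in $\mathcal S_\Delta$ if $G\in\mathcal L_\Delta$ and $(G*G)(x+\Delta)\sim2G(x+\Delta)$ as $x\to\infty$. $a\sim b$ means $a/b\to1$. *)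

theory Defs
  imports "HOL-Probability.Probability"
begin

definition shift_int :: "real \<Rightarrow> ereal \<Rightarrow> real set" where
  "shift_int x T = {r. x < r \<and> ereal r \<le> ereal x + T}"

definition L_Delta :: "ereal \<Rightarrow> real measure \<Rightarrow> bool" where
  "L_Delta T G \<longleftrightarrow>
     eventually (\<lambda>x. measure G (shift_int x T) > 0) at_top \<and>
     (\<forall>e>0. eventually (\<lambda>x. \<forall>t\<in>{0..1}.
        \<bar>measure G (shift_int (x + t) T) / measure G (shift_int x T) - 1\<bar> < e) at_top)"

definition S_Delta :: "ereal \<Rightarrow> real measure \<Rightarrow> bool" where
  "S_Delta T G \<longleftrightarrow>
     prob_space G \<and> sets G = sets borel \<and> measure G {..<0} = 0 \<and>
     (\<forall>x. measure G {x<..} > 0) \<and>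
     L_Delta T G \<and>
     ((\<lambda>x. measure (G \<star> G) (shift_int x T) / measure G (shift_int x T)) \<longlongrightarrow> 2) at_top"

text \<open>Partial sums S_n = zeta_1 + ... + zeta_n (zeta_1 is \<open>\<zeta> 0\<close>).\<close>
definition psum :: "(nat \<Rightarrow> 'a \<Rightarrow> real) \<Rightarrow> nat \<Rightarrow> 'a \<Rightarrow> real" where
  "psum \<zeta> n \<omega> = (\<Sum>i<n. \<zeta> i \<omega>)"

definition first_passage :: "(nat \<Rightarrow> 'a \<Rightarrow> real) \<Rightarrow> real \<Rightarrow> 'a \<Rightarrow> nat" where
  "first_passage \<zeta> x \<omega> = (LEAST n. 1 \<le> n \<and> x < psum \<zeta> n \<omega>)"

definition overshoot :: "(nat \<Rightarrow> 'a \<Rightarrow> real) \<Rightarrow> real \<Rightarrow> 'a \<Rightarrow> real" where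
  "overshoot \<zeta> x \<omega> = psum \<zeta> (first_passage \<zeta> x \<omega>) \<omega> - x"

end

theory Submission
  imports Defs
begin


lemma shift_int_borel[measurable]: "shift_int x T \<in> sets borel"
proof (cases T)
  case (real t)
  then have "shift_int x T = {x<..x+t}" by (auto simp: shift_int_def)
  then show ?thesis by simp
next
  case PInf
  then have "shift_int x T = {x<..}" by (auto simp: shift_int_def)
  then show ?thesis by simp
next
  case MInf
  then have "shift_int x T = {}" by (auto simp: shift_int_def)
  then show ?thesis by simp
qed

lemma shift_int_minus: "{r. r + s \<in> shift_int w T} = shift_int (w - s) T"
  by (cases T) (auto simp: shift_int_def max_def)

lemma shift_int_minus2: "{r. s + r \<in> shift_int w T} = shift_int (w - s) T"
  by (cases T) (auto simp: shift_int_def max_def)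

lemma shift_int_gt: "r \<in> shift_int w T \<Longrightarrow> w < r"
  by (auto simp: shift_int_def)

lemma shift_int_Int: "shift_int a T \<inter> {b<..} \<subseteq> shift_int (max a b) T"
  by (cases T) (auto simp: shift_int_def max_def)

locale sdelta =
  fixes T :: ereal and G :: "real measure"
  assumes Tpos: "0 < T" and SD: "S_Delta T G"
begin

definition g :: "real \<Rightarrow> real" where "g w = measure G (shift_int w T)"

lemma probG: "prob_space G" using SD by (simp add: S_Delta_def)
lemma setsG[measurable_cong, simp]: "sets G = sets borel" using SD by (simp add: S_Delta_def)
lemma spaceG[simp]: "space G = UNIV" using sets_eq_imp_space_eq[OF setsG] by simp
lemma negG: "measure G {..<0} = 0" using SD by (simp add: S_Delta_def)

interpretation G: prob_space G by (rule probG)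

lemma AE_G_nonneg: "AE t in G. 0 \<le> t"
proof -
  have "{..<0::real} \<in> null_sets G"
    using negG by (simp add: G.emeasure_eq_measure null_sets_def)
  then show ?thesis
    by (rule AE_I') auto
qed

lemma g_nonneg: "0 \<le> g w" by (simp add: g_def)
lemma g_le1: "g w \<le> 1" by (simp add: g_def)
lemma emeasure_g: "emeasure G (shift_int w T) = ennreal (g w)"
  by (simp add: g_def G.emeasure_eq_measure)

lemma LD: "L_Delta T G" using SD by (simp add: S_Delta_def)

lemma g_pos_ev: "eventually (\<lambda>x. g x > 0) at_top"
  using LD by (simp add: L_Delta_def g_def)

lemma step_ev: "e > 0 \<Longrightarrow> eventually (\<lambda>x. \<forall>t\<in>{0..1}. \<bar>g (x+t) - g x\<bar> \<le> e * g x) at_top"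
proof -
  assume e: "e > 0"
  have "eventually (\<lambda>x. \<forall>t\<in>{0..1}. \<bar>g (x+t) / g x - 1\<bar> < e) at_top"
    using LD e by (simp add: L_Delta_def g_def)
  with g_pos_ev show ?thesis
  proof eventually_elim
    case (elim x)
    show ?case
    proof
      fix t assume "t \<in> {0..(1::real)}"
      with elim have "\<bar>g (x+t) / g x - 1\<bar> < e" by auto
      then have "\<bar>(g (x+t) - g x) / g x\<bar> < e" using elim by (simp add: field_simps)
      then show "\<bar>g (x+t) - g x\<bar> \<le> e * g x" using elim by (simp add: abs_divide field_simps)
    qed
  qed
qed

lemma ev_shift: "eventually P (at_top::real filter) \<Longrightarrow> eventually (\<lambda>x. P (x + c)) at_top"
proof -
  assume "eventually P at_top"
  then obtain N where N: "\<And>x. x \<ge> N \<Longrightarrow> P x" by (auto simp: eventually_at_top_linorder)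
  show ?thesis unfolding eventually_at_top_linorder
    by (rule exI[of _ "N - c"]) (auto intro: N)
qed

lemma chain_ev: "e > 0 \<Longrightarrow> eventually (\<lambda>x. \<forall>t\<in>{0..real k}. \<bar>g (x+t) - g x\<bar> \<le> e * g x) at_top"
proof (induction k arbitrary: e)
  case 0
  then show ?case by (auto simp: g_nonneg)
next
  case (Suc k)
  define e' where "e' = min e 1 / 3"
  have e': "e' > 0" "e' \<le> 1/3" "3 * e' \<le> e" using Suc.prems by (auto simp: e'_def)
  have ih: "eventually (\<lambda>x. \<forall>t\<in>{0..real k}. \<bar>g (x+1+t) - g (x+1)\<bar> \<le> e' * g (x+1)) at_top"
    using ev_shift[OF Suc.IH[OF e'(1)], of 1] by simp
  from ih step_ev[OF e'(1)] show ?case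
  proof eventually_elim
    case (elim x)
    show ?case
    proof
      fix t assume t: "t \<in> {0..real (Suc k)}"
      show "\<bar>g (x+t) - g x\<bar> \<le> e * g x"
      proof (cases "t \<le> 1")
        case True
        then have "\<bar>g (x+t) - g x\<bar> \<le> e' * g x" using elim t by auto
        also have "\<dots> \<le> e * g x" using e' g_nonneg[of x] by (intro mult_right_mono) auto
        finally show ?thesis .
      next
        case False
        then have t1: "t - 1 \<in> {0..real k}" using t by auto
        have a: "\<bar>g (x+1+(t-1)) - g (x+1)\<bar> \<le> e' * g (x+1)" using elim(1) t1 by blast
        have b: "\<bar>g (x+1) - g x\<bar> \<le> e' * g x" using elim(2) by auto
        have c: "g (x+1) \<le> (1+e') * g x" using b by (auto simp: algebra_simps)
        have "\<bar>g (x+t) - g x\<bar> \<le> e' * g (x+1) + e' * g x" using a b by simp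
        also have "\<dots> \<le> e' * ((1+e') * g x) + e' * g x"
          using c e' by (intro add_mono mult_left_mono) auto
        also have "\<dots> = e' * (2 + e') * g x" by (simp add: algebra_simps)
        also have "\<dots> \<le> e * g x"
        proof (rule mult_right_mono)
          have "e' * (2 + e') \<le> e' * 3" using e' by (intro mult_left_mono) auto
          then show "e' * (2 + e') \<le> e" using e' by linarith
        qed (rule g_nonneg)
        finally show ?thesis .
      qed
    qed
  qed
qed

lemma ratio_ev: "e > 0 \<Longrightarrow> eventually (\<lambda>z. \<forall>s\<in>{-A..A}. \<bar>g (z - s) - g z\<bar> \<le> e * g z) at_top"
proof -
  assume e: "e > 0"
  define k where "k = nat (ceiling A)"
  have kA: "A \<le> real k" unfolding k_def by linarith
  define e' where "e' = min e 1 / 4"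
  have e': "e' > 0" "e' \<le> 1/4" "4 * e' \<le> e" using e by (auto simp: e'_def)
  have c1: "eventually (\<lambda>x. \<forall>t\<in>{0..real k}. \<bar>g (x+t) - g x\<bar> \<le> e' * g x) at_top"
    by (rule chain_ev[OF e'(1)])
  have c2: "eventually (\<lambda>x. \<forall>t\<in>{0..real k}. \<bar>g (x - real k + t) - g (x - real k)\<bar> \<le> e' * g (x - real k)) at_top"
    using ev_shift[OF c1, of "- real k"] by simp
  from c1 c2 show ?thesis
  proof eventually_elim
    case (elim z)
    show ?case
    proof
      fix s assume s: "s \<in> {-A..A}"
      show "\<bar>g (z - s) - g z\<bar> \<le> e * g z"
      proof (cases "s \<ge> 0")
        case False
        then have "-s \<in> {0..real k}" using s kA by auto
        then have "\<bar>g (z + -s) - g z\<bar> \<le> e' * g z" using elim(1) by blast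
        also have "\<dots> \<le> e * g z" using e' g_nonneg[of z] by (intro mult_right_mono) auto
        finally show ?thesis by simp
      next
        case True
        define w where "w = z - real k"
        have "real k - s \<in> {0..real k}" using s True kA by auto
        from elim(2)[rule_format, OF this]
        have 1: "\<bar>g (w + (real k - s)) - g w\<bar> \<le> e' * g w"
          unfolding w_def by simp
        have "real k \<in> {0..real k}" by simp
        from elim(2)[rule_format, OF this]
        have 2: "\<bar>g (w + real k) - g w\<bar> \<le> e' * g w"
          unfolding w_def by simp
        have zs: "w + (real k - s) = z - s" "w + real k = z" unfolding w_def by auto
        have "e' * g w \<le> 1/4 * g w" using e' g_nonneg[of w] by (intro mult_right_mono) auto
        then have gw: "g w \<le> 4/3 * g z" using 2 unfolding zs by linarith
        have "\<bar>g (z - s) - g z\<bar> \<le> 2 * e' * g w" using 1 2 unfolding zs by simp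
        also have "\<dots> \<le> 2 * e' * (4/3 * g z)" using gw e' by (intro mult_left_mono) auto
        also have "\<dots> = (8/3 * e') * g z" by simp
        also have "\<dots> \<le> e * g z" using e' g_nonneg[of z] by (intro mult_right_mono) auto
        finally show ?thesis .
      qed
    qed
  qed
qed

end



lemma tail_small:
  fixes F :: "real measure"
  assumes "prob_space F" "sets F = sets borel" "e > 0"
  shows "\<exists>B. \<forall>B'\<ge>B. measure F {B'<..} \<le> e"
proof -
  interpret F: prob_space F by fact
  have "(\<lambda>n. measure F {real n<..}) \<longlonglongrightarrow> measure F (\<Inter>n. {real n<..})"
  proof (rule F.finite_Lim_measure_decseq[of "\<lambda>n. {real n<..}"])
    show "range (\<lambda>n. {real n<..}) \<subseteq> sets F" unfolding assms(2) by auto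
    show "decseq (\<lambda>n. {real n<..})" unfolding decseq_def by auto
  qed
  moreover have "(\<Inter>n. {real n<..}) = {}"
  proof (rule ccontr)
    assume "(\<Inter>n. {real n<..}) \<noteq> {}"
    then obtain x where "\<And>n. real n < x" by auto
    moreover obtain n where "x < real n" using reals_Archimedean2 by blast
    ultimately show False using less_asym by blast
  qed
  ultimately have "(\<lambda>n. measure F {real n<..}) \<longlonglongrightarrow> 0" by simp
  then have "eventually (\<lambda>n. measure F {real n<..} < e) sequentially"
    using assms(3) by (rule order_tendstoD)
  then obtain N where N: "measure F {real N<..} < e" by (auto simp: eventually_sequentially)
  show ?thesis
  proof (intro exI allI impI)
    fix B' assume "real N \<le> B'"
    then have "measure F {B'<..} \<le> measure F {real N<..}"
      by (intro F.finite_measure_mono) (auto simp: assms(2))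
    then show "measure F {B'<..} \<le> e" using N by simp
  qed
qed

lemma pair_s:
  fixes F H :: "real measure"
  assumes "prob_space F" "prob_space H" "sets F = sets borel" "sets H = sets borel"
    "E \<in> sets (borel \<Otimes>\<^sub>M borel)"
  shows "emeasure (F \<Otimes>\<^sub>M H) E = (\<integral>\<^sup>+s. emeasure H {t. (s,t) \<in> E} \<partial>F)"
proof -
  interpret H: prob_space H by fact
  have "E \<in> sets (F \<Otimes>\<^sub>M H)" using assms(5) sets_pair_measure_cong[OF assms(3,4)] by simp
  from H.emeasure_pair_measure_alt[OF this] show ?thesis by (simp add: vimage_def)
qed

lemma pair_t:
  fixes F H :: "real measure"
  assumes "prob_space F" "prob_space H" "sets F = sets borel" "sets H = sets borel"
    "E \<in> sets (borel \<Otimes>\<^sub>M borel)"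
  shows "emeasure (F \<Otimes>\<^sub>M H) E = (\<integral>\<^sup>+t. emeasure F {s. (s,t) \<in> E} \<partial>H)"
proof -
  interpret F: prob_space F by fact
  interpret H: prob_space H by fact
  interpret pair_sigma_finite F H ..
  have "E \<in> sets (F \<Otimes>\<^sub>M H)" using assms(5) sets_pair_measure_cong[OF assms(3,4)] by simp
  from emeasure_pair_measure_alt2[OF this] show ?thesis by (simp add: vimage_def)
qed

lemma pair_pred: "Measurable.pred (borel \<Otimes>\<^sub>M borel) P \<Longrightarrow> {p::real\<times>real. P p} \<in> sets (borel \<Otimes>\<^sub>M borel)"
  unfolding pred_def by (simp add: space_pair_measure)

lemma sets_test: "{p::real\<times>real. fst p \<le> A \<and> fst p + snd p \<in> shift_int z T} \<in> sets (borel \<Otimes>\<^sub>M borel)"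
  by (rule pair_pred) measurable

context sdelta
begin

interpretation G: prob_space G by (rule probG)

abbreviation SI :: "real \<Rightarrow> real set" where "SI w \<equiv> shift_int w T"

lemma pairG: "prob_space (G \<Otimes>\<^sub>M G)"
  by (simp add: G.prob_space_axioms prob_space_pair)

lemma conv_GG: "measure (G \<star> G) (SI z) = measure (G \<Otimes>\<^sub>M G) {p. fst p + snd p \<in> SI z}"
proof -
  have m: "(\<lambda>(x,y). x + y) \<in> G \<Otimes>\<^sub>M G \<rightarrow>\<^sub>M (borel :: real measure)"
    by measurable
  have "emeasure (G \<star> G) (SI z) = emeasure (G \<Otimes>\<^sub>M G) ((\<lambda>(x,y). x + y) -` SI z \<inter> space (G \<Otimes>\<^sub>M G))"
    unfolding convolution_def by (rule emeasure_distr[OF m]) simp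
  also have "(\<lambda>(x,y). x + y) -` SI z \<inter> space (G \<Otimes>\<^sub>M G) = {p. fst p + snd p \<in> SI z}"
    by (auto simp: space_pair_measure)
  finally show ?thesis by (simp add: measure_def)
qed

lemma GA_bound:
  assumes "\<forall>B'\<ge>A1. measure G {B'<..} \<le> e" "A \<ge> A1" "A \<ge> 0"
  shows "measure G {0..A} \<ge> 1 - e"
proof -
  have U: "{..<0} \<union> {0..A} \<union> {A<..} = (UNIV::real set)" using assms(3) by auto
  have "1 = measure G ({..<0} \<union> {0..A} \<union> {A<..})"
    unfolding U using G.prob_space by simp
  also have "\<dots> = measure G ({..<0} \<union> {0..A}) + measure G {A<..}"
    by (intro G.finite_measure_Union) (use assms(3) in auto)
  also have "\<dots> = measure G {..<0} + measure G {0..A} + measure G {A<..}"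
    by (subst G.finite_measure_Union) auto
  finally show ?thesis using assms negG by auto
qed

lemma sec_s: "{t. (s, t) \<in> {p. fst p \<le> A \<and> fst p + snd p \<in> SI z}} = (if s \<le> A then SI (z - s) else {})"
  using shift_int_minus2[of s z T] by auto

lemma sec_Q: "{s. (s, t) \<in> {p. A < snd p \<and> snd p \<le> z - A \<and> fst p + snd p \<in> SI z}} = (if t \<in> {A<..z-A} then SI (z - t) else {})"
  using shift_int_minus[of t z T] by auto

lemma sec_P2:
  assumes "t \<le> A" "2 * A \<le> z"
  shows "{s. (s, t) \<in> {p. A < fst p \<and> snd p \<le> A \<and> fst p + snd p \<in> SI z}} = SI (z - t)"
proof -
  have "s \<in> SI (z - t) \<Longrightarrow> A < s" for s using shift_int_gt[of s "z - t" T] assms by auto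
  then show ?thesis using shift_int_minus[of t z T] assms by auto
qed

lemma C1:
  assumes e: "e > 0"
  shows "\<exists>A1\<ge>0. \<forall>A\<ge>A1. eventually (\<lambda>z.
     (\<integral>\<^sup>+t. indicator {A<..z-A} t * ennreal (g (z - t)) \<partial>G) \<le> ennreal (e * g z)) at_top"
proof -
  define e' where "e' = min e 1 / 5"
  have e': "e' > 0" using e by (simp add: e'_def)
  have e'1: "e' \<le> 1/5" "5 * e' \<le> e" by (auto simp: e'_def)
  obtain A0 where A0: "\<forall>B'\<ge>A0. measure G {B'<..} \<le> e'"
    using tail_small[OF probG setsG e'] by blast
  interpret PP: prob_space "G \<Otimes>\<^sub>M G" by (rule pairG)
  have PPsets: "sets (G \<Otimes>\<^sub>M G) = sets (borel \<Otimes>\<^sub>M borel)"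
    by (rule sets_pair_measure_cong) simp_all
  show ?thesis
  proof (intro exI conjI allI impI)
    show "0 \<le> max A0 0" by simp
    fix A assume A: "max A0 0 \<le> A"
    have GA: "measure G {0..A} \<ge> 1 - e'" using GA_bound[OF A0] A by auto
    have conv: "((\<lambda>x. measure (G \<star> G) (SI x) / g x) \<longlongrightarrow> 2) at_top"
      using SD by (simp add: S_Delta_def g_def)
    have ev1: "eventually (\<lambda>x. measure (G \<star> G) (SI x) / g x < 2 + e') at_top"
      using conv e' by (intro order_tendstoD(2)) auto
    from ev1 g_pos_ev ratio_ev[OF e', of A] eventually_ge_at_top[of "2 * A"]
    show "eventually (\<lambda>z. (\<integral>\<^sup>+t. indicator {A<..z-A} t * ennreal (g (z - t)) \<partial>G) \<le> ennreal (e * g z)) at_top"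
    proof eventually_elim
      case (elim z)
      define Z where "Z = {p::real\<times>real. fst p + snd p \<in> SI z}"
      define P1 where "P1 = {p::real\<times>real. fst p \<le> A \<and> fst p + snd p \<in> SI z}"
      define P2 where "P2 = {p::real\<times>real. A < fst p \<and> snd p \<le> A \<and> fst p + snd p \<in> SI z}"
      define P3 where "P3 = {p::real\<times>real. A < fst p \<and> A < snd p \<and> fst p + snd p \<in> SI z}"
      define Q where "Q = {p::real\<times>real. A < snd p \<and> snd p \<le> z - A \<and> fst p + snd p \<in> SI z}"
      have meas: "Z \<in> sets (G \<Otimes>\<^sub>M G)" "P1 \<in> sets (G \<Otimes>\<^sub>M G)" "P2 \<in> sets (G \<Otimes>\<^sub>M G)"
        "P3 \<in> sets (G \<Otimes>\<^sub>M G)" "Q \<in> sets (G \<Otimes>\<^sub>M G)"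
        unfolding PPsets Z_def P1_def P2_def P3_def Q_def by (rule pair_pred; measurable)+
      have gz: "g z > 0" using elim by simp
      have mZ: "measure (G \<Otimes>\<^sub>M G) Z \<le> (2 + e') * g z"
        using elim(1) gz conv_GG[of z] unfolding Z_def by (simp add: field_simps)
      have Zu: "Z = (P1 \<union> P2) \<union> P3" unfolding Z_def P1_def P2_def P3_def by auto
      have split: "measure (G \<Otimes>\<^sub>M G) Z = measure (G \<Otimes>\<^sub>M G) P1 + measure (G \<Otimes>\<^sub>M G) P2 + measure (G \<Otimes>\<^sub>M G) P3"
      proof -
        have d1: "P1 \<inter> P2 = {}" "(P1 \<union> P2) \<inter> P3 = {}" unfolding P1_def P2_def P3_def by auto
        have "measure (G \<Otimes>\<^sub>M G) ((P1 \<union> P2) \<union> P3) = measure (G \<Otimes>\<^sub>M G) (P1 \<union> P2) + measure (G \<Otimes>\<^sub>M G) P3"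
          using meas d1 by (intro PP.finite_measure_Union) auto
        also have "measure (G \<Otimes>\<^sub>M G) (P1 \<union> P2) = measure (G \<Otimes>\<^sub>M G) P1 + measure (G \<Otimes>\<^sub>M G) P2"
          using meas d1 by (intro PP.finite_measure_Union) auto
        finally show ?thesis using Zu by simp
      qed
      have low: "ennreal ((1 - e') * g z) * emeasure G {0..A} \<le> (\<integral>\<^sup>+t. indicator {..A} t * ennreal (g (z - t)) \<partial>G)"
      proof -
        have "ennreal ((1 - e') * g z) * emeasure G {0..A} = (\<integral>\<^sup>+t. ennreal ((1 - e') * g z) * indicator {0..A} t \<partial>G)"
          by (simp add: nn_integral_cmult)
        also have "\<dots> \<le> (\<integral>\<^sup>+t. indicator {..A} t * ennreal (g (z - t)) \<partial>G)"
        proof (rule nn_integral_mono)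
          fix t
          show "ennreal ((1 - e') * g z) * indicator {0..A} t \<le> indicator {..A} t * ennreal (g (z - t))"
          proof (cases "t \<in> {0..A}")
            case True
            then have "t \<in> {-A..A}" by auto
            then have "\<bar>g (z - t) - g z\<bar> \<le> e' * g z" using elim(3) by blast
            then have "(1 - e') * g z \<le> g (z - t)" by (simp add: algebra_simps)
            then show ?thesis using True by (simp add: indicator_def ennreal_leI)
          qed (simp add: indicator_def)
        qed
        finally show ?thesis .
      qed
      have "emeasure (G \<Otimes>\<^sub>M G) P1 = (\<integral>\<^sup>+s. emeasure G {t. (s,t) \<in> P1} \<partial>G)"
        by (rule pair_s[OF probG probG setsG setsG]) (use meas PPsets in simp)
      also have "\<dots> = (\<integral>\<^sup>+s. indicator {..A} s * ennreal (g (z - s)) \<partial>G)"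
        unfolding P1_def sec_s by (intro nn_integral_cong) (simp add: emeasure_g indicator_def)
      finally have e1: "emeasure (G \<Otimes>\<^sub>M G) P1 = (\<integral>\<^sup>+s. indicator {..A} s * ennreal (g (z - s)) \<partial>G)" .
      have "emeasure (G \<Otimes>\<^sub>M G) P2 = (\<integral>\<^sup>+t. emeasure G {s. (s,t) \<in> P2} \<partial>G)"
        by (rule pair_t[OF probG probG setsG setsG]) (use meas PPsets in simp)
      also have "\<dots> \<ge> (\<integral>\<^sup>+t. indicator {..A} t * ennreal (g (z - t)) \<partial>G)"
      proof (rule nn_integral_mono)
        fix t
        show "indicator {..A} t * ennreal (g (z - t)) \<le> emeasure G {s. (s, t) \<in> P2}"
        proof (cases "t \<le> A")
          case True
          then show ?thesis unfolding P2_def using sec_P2[OF True elim(4)] by (simp add: emeasure_g)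
        qed simp
      qed
      finally have e2: "emeasure (G \<Otimes>\<^sub>M G) P2 \<ge> (\<integral>\<^sup>+t. indicator {..A} t * ennreal (g (z - t)) \<partial>G)" .
      have "emeasure (G \<Otimes>\<^sub>M G) Q = (\<integral>\<^sup>+t. emeasure G {s. (s,t) \<in> Q} \<partial>G)"
        by (rule pair_t[OF probG probG setsG setsG]) (use meas PPsets in simp)
      also have "\<dots> = (\<integral>\<^sup>+t. indicator {A<..z-A} t * ennreal (g (z - t)) \<partial>G)"
        unfolding Q_def sec_Q by (intro nn_integral_cong) (simp add: emeasure_g indicator_def)
      finally have eQ: "emeasure (G \<Otimes>\<^sub>M G) Q = (\<integral>\<^sup>+t. indicator {A<..z-A} t * ennreal (g (z - t)) \<partial>G)" .
      have GA': "emeasure G {0..A} = ennreal (measure G {0..A})" by (simp add: G.emeasure_eq_measure)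
      have h: "0 \<le> (1 - e') * g z" using e'1 gz by auto
      have c: "(1 - e') * g z * (1 - e') \<le> (1 - e') * g z * measure G {0..A}"
        using GA h by (intro mult_left_mono) auto
      have low': "ennreal ((1 - e') * g z * measure G {0..A}) \<le> (\<integral>\<^sup>+t. indicator {..A} t * ennreal (g (z - t)) \<partial>G)"
        using low h unfolding GA' by (simp add: ennreal_mult'')
      have m1: "measure (G \<Otimes>\<^sub>M G) P1 \<ge> (1 - e') * g z * (1 - e')"
      proof -
        have "ennreal ((1 - e') * g z * measure G {0..A}) \<le> ennreal (measure (G \<Otimes>\<^sub>M G) P1)"
          using low' e1 by (simp add: PP.emeasure_eq_measure)
        then have "(1 - e') * g z * measure G {0..A} \<le> measure (G \<Otimes>\<^sub>M G) P1"
          by (simp add: ennreal_le_iff)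
        then show ?thesis using c by linarith
      qed
      have m2: "measure (G \<Otimes>\<^sub>M G) P2 \<ge> (1 - e') * g z * (1 - e')"
      proof -
        have "ennreal ((1 - e') * g z * measure G {0..A}) \<le> emeasure (G \<Otimes>\<^sub>M G) P2"
          using low' e2 by (rule order_trans)
        then have "ennreal ((1 - e') * g z * measure G {0..A}) \<le> ennreal (measure (G \<Otimes>\<^sub>M G) P2)"
          by (simp add: PP.emeasure_eq_measure)
        then have "(1 - e') * g z * measure G {0..A} \<le> measure (G \<Otimes>\<^sub>M G) P2"
          by (simp add: ennreal_le_iff)
        then show ?thesis using c by linarith
      qed
      have QP3: "Q \<subseteq> P3" unfolding Q_def P3_def using shift_int_gt by force
      have "measure (G \<Otimes>\<^sub>M G) Q \<le> measure (G \<Otimes>\<^sub>M G) P3"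
        using QP3 meas by (intro PP.finite_measure_mono) auto
      also have "\<dots> \<le> (2 + e') * g z - 2 * ((1 - e') * g z * (1 - e'))"
        using split mZ m1 m2 by linarith
      also have "\<dots> \<le> e * g z"
      proof -
        have "(2 + e') * g z - 2 * ((1 - e') * g z * (1 - e')) = (5 * e' - 2 * e'^2) * g z"
          by (simp add: algebra_simps power2_eq_square)
        also have "\<dots> \<le> (5 * e') * g z" using gz by (intro mult_right_mono) auto
        also have "\<dots> \<le> e * g z" using gz e'1 by (intro mult_right_mono) auto
        finally show ?thesis .
      qed
      finally have "measure (G \<Otimes>\<^sub>M G) Q \<le> e * g z" .
      then show ?case
        unfolding eQ[symmetric] by (simp add: PP.emeasure_eq_measure ennreal_leI)
    qed
  qed
qed

end




context sdelta
begin

interpretation G: prob_space G by (rule probG)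

lemma low_chain_ex: "\<exists>X0. \<forall>x\<ge>X0. g x > 0 \<and> (\<forall>n::nat. \<forall>t\<in>{0..real n}. g (x + t) \<ge> g x / 2^n)"
proof -
  have "eventually (\<lambda>x. g x > 0 \<and> (\<forall>t\<in>{0..1}. \<bar>g (x+t) - g x\<bar> \<le> 1/2 * g x)) at_top"
    using g_pos_ev step_ev[of "1/2", simplified] by eventually_elim auto
  then obtain X0 where X0: "\<And>x. x \<ge> X0 \<Longrightarrow> g x > 0 \<and> (\<forall>t\<in>{0..1}. \<bar>g (x+t) - g x\<bar> \<le> 1/2 * g x)"
    by (auto simp: eventually_at_top_linorder)
  have step: "x \<ge> X0 \<Longrightarrow> t \<in> {0..1} \<Longrightarrow> g (x + t) \<ge> g x / 2" for x t
  proof -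
    assume "x \<ge> X0" "t \<in> {0..1}"
    then have "\<bar>g (x+t) - g x\<bar> \<le> 1/2 * g x" using X0 by blast
    then show ?thesis by linarith
  qed
  have main: "\<forall>x\<ge>X0. \<forall>t\<in>{0..real n}. g (x + t) \<ge> g x / 2^n" for n
  proof (induction n)
    case 0 then show ?case by simp
  next
    case (Suc n)
    show ?case
    proof (intro allI impI ballI)
      fix x t assume x: "x \<ge> X0" and t: "t \<in> {0..real (Suc n)}"
      show "g (x + t) \<ge> g x / 2 ^ Suc n"
      proof (cases "t \<le> 1")
        case True
        then have "g (x + t) \<ge> g x / 2" using step x t by auto
        moreover have "g x / 2 ^ Suc n \<le> g x / 2"
          using g_nonneg[of x] by (intro divide_left_mono) auto
        ultimately show ?thesis by linarith
      next
        case False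
        then have t1: "t - 1 \<in> {0..real n}" using t by auto
        have x1: "x + 1 \<ge> X0" using x by simp
        have "g (x + 1 + (t - 1)) \<ge> g (x + 1) / 2^n" using Suc.IH[rule_format, OF x1 t1] .
        moreover have "g (x + 1) \<ge> g x / 2" using step x by auto
        then have "g (x + 1) / 2^n \<ge> g x / 2 / 2^n" by (intro divide_right_mono) auto
        ultimately show ?thesis by (simp add: field_simps)
      qed
    qed
  qed
  show ?thesis using X0 main by blast
qed

lemma cdf_meas: "(\<lambda>x. measure G {..x}) \<in> borel_measurable borel"
  by (rule borel_measurable_mono) (auto simp: mono_def intro!: G.finite_measure_mono)

lemma g_meas[measurable]: "g \<in> borel_measurable borel"
proof (cases T)
  case (real t)
  then have t: "t > 0" using Tpos by simp
  have "g w = measure G {..w+t} - measure G {..w}" for w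
  proof -
    have "SI w = {..w+t} - {..w}" using real by (auto simp: shift_int_def)
    then show ?thesis unfolding g_def using t by (simp add: G.finite_measure_Diff)
  qed
  then have eq: "g = (\<lambda>w. measure G {..w+t} - measure G {..w})" by auto
  have m1: "(\<lambda>w. measure G {..w+t}) \<in> borel_measurable borel"
    using measurable_compose[OF _ cdf_meas, of "\<lambda>w. w + t" borel] by simp
  show ?thesis unfolding eq using m1 cdf_meas by (rule borel_measurable_diff)
next
  case PInf
  have "g w = 1 - measure G {..w}" for w
  proof -
    have "SI w = UNIV - {..w}" using PInf by (auto simp: shift_int_def)
    then show ?thesis unfolding g_def by (simp add: G.prob_compl[simplified])
  qed
  then have eq: "g = (\<lambda>w. 1 - measure G {..w})" by auto
  show ?thesis unfolding eq using cdf_meas by measurable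
next
  case MInf then show ?thesis using Tpos by simp
qed

lemma kesten_step:
  fixes F :: "real measure"
  assumes Fp: "prob_space F" and Fs: "sets F = sets borel" and Fnn: "AE s in F. 0 \<le> s"
    and A: "A \<ge> 0" and B: "B \<ge> 0" and e: "e \<ge> 0"
    and i1: "(\<integral>\<^sup>+t. indicator {A<..w-A} t * ennreal (g (w - t)) \<partial>G) \<le> ennreal (e * g w)"
    and i2: "\<forall>s\<in>{-A..A}. \<bar>g (w - s) - g w\<bar> \<le> e * g w"
    and IH: "\<forall>v\<ge>A. emeasure F (SI v) \<le> ennreal (B * g v)"
  shows "emeasure (F \<Otimes>\<^sub>M G) {p. fst p + snd p \<in> SI w} \<le> ennreal ((B * (1 + 2*e) + (1 + e)) * g w)"
proof -
  interpret F: prob_space F by fact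
  interpret PP: prob_space "F \<Otimes>\<^sub>M G" by (simp add: F.prob_space_axioms G.prob_space_axioms prob_space_pair)
  have PPsets: "sets (F \<Otimes>\<^sub>M G) = sets (borel \<Otimes>\<^sub>M borel)"
    by (rule sets_pair_measure_cong[OF Fs]) simp
  define Za where "Za = {p::real\<times>real. snd p \<le> w - A \<and> fst p + snd p \<in> SI w}"
  define Zb where "Zb = {p::real\<times>real. w - A < snd p \<and> fst p + snd p \<in> SI w}"
  have meas: "Za \<in> sets (borel \<Otimes>\<^sub>M borel)" "Zb \<in> sets (borel \<Otimes>\<^sub>M borel)"
    unfolding Za_def Zb_def by (rule pair_pred; measurable)+
  have Zu: "{p. fst p + snd p \<in> SI w} = Za \<union> Zb" unfolding Za_def Zb_def by auto
  have dis: "Za \<inter> Zb = {}" unfolding Za_def Zb_def by auto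
  have gw: "0 \<le> g w" by (rule g_nonneg)
  have ratio: "g (w - s) \<le> (1 + e) * g w" if "s \<in> {0..A}" for s
  proof -
    have "s \<in> {-A..A}" using that A by auto
    then have "\<bar>g (w - s) - g w\<bar> \<le> e * g w" using i2 by blast
    then show ?thesis by (simp add: algebra_simps)
  qed
  have "emeasure (F \<Otimes>\<^sub>M G) Za = (\<integral>\<^sup>+t. emeasure F {s. (s,t) \<in> Za} \<partial>G)"
    by (rule pair_t[OF Fp probG Fs setsG meas(1)])
  also have "\<dots> \<le> (\<integral>\<^sup>+t. ennreal B * (indicator {..w-A} t * ennreal (g (w - t))) \<partial>G)"
  proof (rule nn_integral_mono)
    fix t
    show "emeasure F {s. (s, t) \<in> Za} \<le> ennreal B * (indicator {..w-A} t * ennreal (g (w - t)))"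
    proof (cases "t \<le> w - A")
      case True
      then have "{s. (s, t) \<in> Za} = SI (w - t)" unfolding Za_def using shift_int_minus[of t w T] by auto
      moreover have "emeasure F (SI (w - t)) \<le> ennreal (B * g (w - t))" using IH True by auto
      ultimately show ?thesis using True B g_nonneg[of "w - t"] by (simp add: ennreal_mult)
    next
      case False
      then have "{s. (s, t) \<in> Za} = {}" unfolding Za_def by auto
      then show ?thesis by simp
    qed
  qed
  also have "\<dots> = ennreal B * (\<integral>\<^sup>+t. indicator {..w-A} t * ennreal (g (w - t)) \<partial>G)"
    by (rule nn_integral_cmult) measurable
  finally have a1: "emeasure (F \<Otimes>\<^sub>M G) Za \<le> ennreal B * (\<integral>\<^sup>+t. indicator {..w-A} t * ennreal (g (w - t)) \<partial>G)" .
  have "(\<integral>\<^sup>+t. indicator {..w-A} t * ennreal (g (w - t)) \<partial>G) \<le>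
      (\<integral>\<^sup>+t. indicator {..A} t * ennreal (g (w - t)) + indicator {A<..w-A} t * ennreal (g (w - t)) \<partial>G)"
    by (rule nn_integral_mono) (auto simp: indicator_def)
  also have "\<dots> = (\<integral>\<^sup>+t. indicator {..A} t * ennreal (g (w - t)) \<partial>G) + (\<integral>\<^sup>+t. indicator {A<..w-A} t * ennreal (g (w - t)) \<partial>G)"
    by (rule nn_integral_add) measurable
  finally have a2: "(\<integral>\<^sup>+t. indicator {..w-A} t * ennreal (g (w - t)) \<partial>G) \<le> (\<integral>\<^sup>+t. indicator {..A} t * ennreal (g (w - t)) \<partial>G) + (\<integral>\<^sup>+t. indicator {A<..w-A} t * ennreal (g (w - t)) \<partial>G)" .
  have "(\<integral>\<^sup>+t. indicator {..A} t * ennreal (g (w - t)) \<partial>G) \<le> (\<integral>\<^sup>+t. ennreal ((1 + e) * g w) \<partial>G)"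
  proof (rule nn_integral_mono_AE)
    show "AE t in G. indicator {..A} t * ennreal (g (w - t)) \<le> ennreal ((1 + e) * g w)"
      using AE_G_nonneg
    proof eventually_elim
      case (elim t)
      show ?case
      proof (cases "t \<le> A")
        case True
        then show ?thesis using ratio[of t] elim by (simp add: ennreal_leI)
      qed simp
    qed
  qed
  also have "(\<integral>\<^sup>+t. ennreal ((1 + e) * g w) \<partial>G) = ennreal ((1 + e) * g w)"
    using G.emeasure_space_1 by simp
  finally have a3: "(\<integral>\<^sup>+t. indicator {..A} t * ennreal (g (w - t)) \<partial>G) \<le> ennreal ((1 + e) * g w)" .
  have a4: "(\<integral>\<^sup>+t. indicator {..w-A} t * ennreal (g (w - t)) \<partial>G) \<le> ennreal ((1 + e) * g w) + ennreal (e * g w)"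
    using a2 add_mono[OF a3 i1] by (rule order_trans)
  have a: "emeasure (F \<Otimes>\<^sub>M G) Za \<le> ennreal B * (ennreal ((1 + e) * g w) + ennreal (e * g w))"
    using a1 mult_left_mono[OF a4, of "ennreal B"] by (rule order_trans) simp
  have a': "ennreal B * (ennreal ((1 + e) * g w) + ennreal (e * g w)) = ennreal (B * (1 + 2*e) * g w)"
  proof -
    have "ennreal ((1 + e) * g w) + ennreal (e * g w) = ennreal ((1 + e) * g w + e * g w)"
      by (rule ennreal_plus[symmetric]) (use e gw in auto)
    moreover have "ennreal B * ennreal ((1 + e) * g w + e * g w) = ennreal (B * ((1 + e) * g w + e * g w))"
      by (rule ennreal_mult[symmetric]) (use e gw B in auto)
    moreover have "B * ((1 + e) * g w + e * g w) = B * (1 + 2*e) * g w" by (simp add: algebra_simps)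
    ultimately show ?thesis by simp
  qed
  have "emeasure (F \<Otimes>\<^sub>M G) Zb = (\<integral>\<^sup>+s. emeasure G {t. (s,t) \<in> Zb} \<partial>F)"
    by (rule pair_s[OF Fp probG Fs setsG meas(2)])
  also have "\<dots> \<le> (\<integral>\<^sup>+s. ennreal ((1 + e) * g w) \<partial>F)"
  proof (rule nn_integral_mono_AE)
    show "AE s in F. emeasure G {t. (s, t) \<in> Zb} \<le> ennreal ((1 + e) * g w)"
      using Fnn
    proof eventually_elim
      case (elim s)
      have "{t. (s, t) \<in> Zb} = SI (w - s) \<inter> {w - A<..}"
        unfolding Zb_def using shift_int_minus2[of s w T] by auto
      also have "\<dots> \<subseteq> SI (max (w - s) (w - A))" by (rule shift_int_Int)
      also have "max (w - s) (w - A) = w - min s A" by (simp add: max_def min_def)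
      finally have "emeasure G {t. (s, t) \<in> Zb} \<le> emeasure G (SI (w - min s A))"
        using shift_int_borel by (intro emeasure_mono) auto
      also have "\<dots> = ennreal (g (w - min s A))" by (rule emeasure_g)
      also have "\<dots> \<le> ennreal ((1 + e) * g w)"
        using ratio[of "min s A"] elim A by (intro ennreal_leI) auto
      finally show ?case .
    qed
  qed
  also have "\<dots> = ennreal ((1 + e) * g w)" by (simp add: F.emeasure_space_1)
  finally have b: "emeasure (F \<Otimes>\<^sub>M G) Zb \<le> ennreal ((1 + e) * g w)" .
  have "emeasure (F \<Otimes>\<^sub>M G) {p. fst p + snd p \<in> SI w} = emeasure (F \<Otimes>\<^sub>M G) Za + emeasure (F \<Otimes>\<^sub>M G) Zb"
    unfolding Zu using meas dis PPsets by (intro plus_emeasure[symmetric]) auto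
  also have "\<dots> \<le> ennreal (B * (1 + 2*e) * g w) + ennreal ((1 + e) * g w)"
    using add_mono[OF a b] unfolding a' .
  also have "\<dots> = ennreal ((B * (1 + 2*e) + (1 + e)) * g w)"
  proof -
    have "ennreal (B * (1 + 2*e) * g w) + ennreal ((1 + e) * g w) = ennreal (B * (1 + 2*e) * g w + (1 + e) * g w)"
      by (rule ennreal_plus[symmetric]) (use e gw B in auto)
    moreover have "B * (1 + 2*e) * g w + (1 + e) * g w = (B * (1 + 2*e) + (1 + e)) * g w" by (simp add: algebra_simps)
    ultimately show ?thesis by simp
  qed
  finally show ?thesis .
qed

lemma kesten:
  fixes F :: "nat \<Rightarrow> real measure"
  assumes Fp: "\<And>m. prob_space (F m)" and Fs: "\<And>m. sets (F m) = sets borel"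
    and Fnn: "\<And>m. AE s in F m. 0 \<le> s"
    and F0: "\<And>w. 0 \<le> w \<Longrightarrow> emeasure (F 0) (SI w) = 0"
    and Frec: "\<And>m w. emeasure (F (Suc m)) (SI w) = emeasure (F m \<Otimes>\<^sub>M G) {p. fst p + snd p \<in> SI w}"
    and eps: "0 < \<epsilon>" "\<epsilon> \<le> 1"
  shows "\<exists>A K. 0 \<le> A \<and> 0 \<le> K \<and> (\<forall>m w. A \<le> w \<longrightarrow> emeasure (F m) (SI w) \<le> ennreal (K * (1+\<epsilon>)^m * g w))"
proof -
  define e where "e = \<epsilon> / 4"
  have e: "e > 0" "e \<le> 1/4" using eps by (auto simp: e_def)
  obtain A1 where A1: "A1 \<ge> 0" "\<forall>A\<ge>A1. eventually (\<lambda>z.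
     (\<integral>\<^sup>+t. indicator {A<..z-A} t * ennreal (g (z - t)) \<partial>G) \<le> ennreal (e * g z)) at_top"
    using C1[OF e(1)] by blast
  obtain X0 where X0: "\<forall>x\<ge>X0. g x > 0 \<and> (\<forall>n::nat. \<forall>t\<in>{0..real n}. g (x + t) \<ge> g x / 2^n)"
    using low_chain_ex by blast
  define A where "A = max A1 (max X0 0)"
  have A: "A \<ge> 0" "A \<ge> A1" "A \<ge> X0" by (auto simp: A_def)
  have "eventually (\<lambda>z. (\<integral>\<^sup>+t. indicator {A<..z-A} t * ennreal (g (z - t)) \<partial>G) \<le> ennreal (e * g z)
      \<and> (\<forall>s\<in>{-A..A}. \<bar>g (z - s) - g z\<bar> \<le> e * g z)) at_top"
    using A1(2) A(2) ratio_ev[OF e(1), of A] by (auto intro: eventually_conj)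
  then obtain W0 where W0: "\<And>z. z \<ge> W0 \<Longrightarrow> (\<integral>\<^sup>+t. indicator {A<..z-A} t * ennreal (g (z - t)) \<partial>G) \<le> ennreal (e * g z)
      \<and> (\<forall>s\<in>{-A..A}. \<bar>g (z - s) - g z\<bar> \<le> e * g z)"
    by (auto simp: eventually_at_top_linorder)
  define W where "W = max W0 A"
  define n where "n = nat (ceiling (W - A))"
  define c where "c = g A / 2^n"
  have gA: "g A > 0" using X0 A by auto
  have c: "c > 0" using gA by (simp add: c_def)
  have gl: "g w \<ge> c" if "A \<le> w" "w \<le> W" for w
  proof -
    have "w - A \<in> {0..real n}" using that unfolding n_def by auto linarith
    then have "g (A + (w - A)) \<ge> g A / 2^n" using X0 A by blast
    then show ?thesis by (simp add: c_def)
  qed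
  define K where "K = max (3 / \<epsilon>) (1 / c)"
  have K: "K \<ge> 3 / \<epsilon>" "K \<ge> 1 / c" by (auto simp: K_def)
  have K0: "K \<ge> 0" using K(1) eps by (smt (verit) divide_pos_pos)
  have main: "\<forall>w. A \<le> w \<longrightarrow> emeasure (F m) (SI w) \<le> ennreal (K * (1+\<epsilon>)^m * g w)" for m
  proof (induction m)
    case 0
    then show ?case using F0 A by auto
  next
    case (Suc m)
    show ?case
    proof (intro allI impI)
      fix w assume w: "A \<le> w"
      interpret Fm: prob_space "F (Suc m)" by (rule Fp)
      have pw: "(1 + \<epsilon>) ^ Suc m \<ge> 1" using eps by (intro one_le_power) auto
      show "emeasure (F (Suc m)) (SI w) \<le> ennreal (K * (1+\<epsilon>)^Suc m * g w)"
      proof (cases "w \<le> W")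
        case True
        have "1 \<le> K * g w"
        proof -
          have "1 = (1 / c) * c" using c by simp
          also have "\<dots> \<le> K * g w" using K(2) gl[OF w True] c K0 by (intro mult_mono) auto
          finally show ?thesis .
        qed
        also have "K * g w \<le> K * (1+\<epsilon>)^Suc m * g w"
        proof -
          have "1 * g w \<le> (1+\<epsilon>)^Suc m * g w" using pw g_nonneg[of w] by (rule mult_right_mono)
          then have "K * (1 * g w) \<le> K * ((1+\<epsilon>)^Suc m * g w)" using K0 by (rule mult_left_mono)
          then show ?thesis by (simp add: mult.assoc)
        qed
        finally have "1 \<le> K * (1+\<epsilon>)^Suc m * g w" .
        have "emeasure (F (Suc m)) (SI w) \<le> 1" by (rule Fm.emeasure_le_1)
        moreover have "(1::ennreal) \<le> ennreal (K * (1+\<epsilon>)^Suc m * g w)"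
          using \<open>1 \<le> K * (1+\<epsilon>)^Suc m * g w\<close> ennreal_leI by fastforce
        ultimately show ?thesis by (rule order_trans)
      next
        case False
        define B where "B = K * (1 + \<epsilon>)^m"
        have pm: "(1 + \<epsilon>) ^ m \<ge> 1" using eps by (intro one_le_power) auto
        have BK: "B \<ge> K" unfolding B_def using K0 pm by (metis mult_left_mono mult.right_neutral)
        have B0: "B \<ge> 0" using BK K0 by linarith
        have wW: "w \<ge> W0" using False by (simp add: W_def)
        have IH: "\<forall>v\<ge>A. emeasure (F m) (SI v) \<le> ennreal (B * g v)" using Suc.IH by (simp add: B_def)
        have "emeasure (F (Suc m)) (SI w) \<le> ennreal ((B * (1 + 2*e) + (1 + e)) * g w)"
          unfolding Frec
          by (rule kesten_step[OF Fp Fs Fnn A(1) B0 _ _ _ IH]) (use e W0[OF wW] in auto)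
        also have "\<dots> \<le> ennreal (K * (1+\<epsilon>)^Suc m * g w)"
        proof (rule ennreal_leI, rule mult_right_mono[OF _ g_nonneg])
          have "B * \<epsilon> \<ge> 3" using BK K(1) eps by (simp add: field_simps) (smt (verit) mult_right_mono)
          then have "B * (1 + 2*e) + (1 + e) \<le> B * (1 + \<epsilon>)" using e eps unfolding e_def by (simp add: algebra_simps)
          moreover have "B * (1 + \<epsilon>) = K * (1 + \<epsilon>) ^ Suc m" by (simp add: B_def)
          ultimately show "B * (1 + 2*e) + (1 + e) \<le> K * (1 + \<epsilon>) ^ Suc m" by simp
        qed
        finally show ?thesis .
      qed
    qed
  qed
  show ?thesis using A(1) K0 main by blast
qed

end



context sdelta
begin

interpretation G: prob_space G by (rule probG)

lemma F_lower_mass: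
  fixes F :: "real measure"
  assumes Fp: "prob_space F" and Fs: "sets F = sets borel" and Fnn: "AE s in F. 0 \<le> s"
    and "\<forall>B'\<ge>B0. measure F {B'<..} \<le> e" "B \<ge> B0" "B \<ge> 0"
  shows "measure F {0..B} \<ge> 1 - e"
proof -
  interpret F: prob_space F by fact
  have sF: "space F = UNIV" using sets_eq_imp_space_eq[OF Fs] by simp
  have n: "measure F {..<0} = 0"
  proof -
    have "AE s in F. s \<notin> {..<0}" using Fnn by eventually_elim auto
    then have "emeasure F {..<0} = 0" using Fs by (subst AE_iff_measurable[symmetric]) (auto simp: sF)
    then show ?thesis by (simp add: F.emeasure_eq_measure)
  qed
  have U: "{..<0} \<union> {0..B} \<union> {B<..} = (UNIV::real set)" using assms(6) by auto
  have "1 = measure F ({..<0} \<union> {0..B} \<union> {B<..})"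
    unfolding U using F.prob_space sF by simp
  also have "\<dots> = measure F ({..<0} \<union> {0..B}) + measure F {B<..}"
    by (intro F.finite_measure_Union) (use assms(6) in \<open>auto simp: Fs\<close>)
  also have "\<dots> = measure F {..<0} + measure F {0..B} + measure F {B<..}"
    by (subst F.finite_measure_Union) (auto simp: Fs)
  finally show ?thesis using assms n by auto
qed

lemma fixed_bounds:
  fixes F :: "real measure"
  assumes Fp: "prob_space F" and Fs: "sets F = sets borel" and Fnn: "AE s in F. 0 \<le> s"
    and A0: "A0 \<ge> 0" and K': "K' \<ge> 0" and kb: "\<forall>w\<ge>A0. emeasure F (SI w) \<le> ennreal (K' * g w)"
    and eps: "\<epsilon> > 0"
  shows "\<exists>X Y. \<forall>x y. X \<le> x \<and> Y \<le> y \<longrightarrow> g (x+y) > 0 \<and>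
     (1 - \<epsilon>) * g (x+y) \<le> measure (F \<Otimes>\<^sub>M G) {p. fst p \<le> x \<and> fst p + snd p \<in> SI (x+y)} \<and>
     measure (F \<Otimes>\<^sub>M G) {p. fst p \<le> x \<and> fst p + snd p \<in> SI (x+y)} \<le> (1 + \<epsilon>) * g (x+y)"
proof -
  interpret F: prob_space F by fact
  interpret PP: prob_space "F \<Otimes>\<^sub>M G" by (simp add: F.prob_space_axioms G.prob_space_axioms prob_space_pair)
  have PPsets: "sets (F \<Otimes>\<^sub>M G) = sets (borel \<Otimes>\<^sub>M borel)"
    by (rule sets_pair_measure_cong[OF Fs]) simp
  define e where "e = min \<epsilon> 1 / 8"
  have e: "e > 0" "e \<le> 1/8" "8 * e \<le> \<epsilon>" using eps by (auto simp: e_def)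
  define e' where "e' = e / (K' + 1)"
  have e': "e' > 0" "K' * e' \<le> e"
  proof -
    show "e' > 0" using e K' by (simp add: e'_def)
    have "K' * e' = e * (K' / (K' + 1))" by (simp add: e'_def)
    also have "\<dots> \<le> e * 1" using K' e by (intro mult_left_mono) auto
    finally show "K' * e' \<le> e" by simp
  qed
  obtain A1 where A1: "A1 \<ge> 0" "\<forall>A\<ge>A1. eventually (\<lambda>z.
     (\<integral>\<^sup>+t. indicator {A<..z-A} t * ennreal (g (z - t)) \<partial>G) \<le> ennreal (e' * g z)) at_top"
    using C1[OF e'(1)] by blast
  define A where "A = max A1 A0"
  have A: "A \<ge> 0" "A \<ge> A1" "A \<ge> A0" using A0 by (auto simp: A_def)
  obtain B0 where B0: "\<forall>B'\<ge>B0. measure F {B'<..} \<le> e" using tail_small[OF Fp Fs e(1)] by blast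
  define B where "B = max B0 0"
  have B: "B \<ge> 0" "B \<ge> B0" by (auto simp: B_def)
  have FB: "measure F {0..B} \<ge> 1 - e" using F_lower_mass[OF Fp Fs Fnn B0 B(2) B(1)] .
  have FBt: "measure F {B<..} \<le> e" using B0 B by auto
  have "eventually (\<lambda>z. g z > 0 \<and> (\<forall>s\<in>{-B..B}. \<bar>g (z - s) - g z\<bar> \<le> e * g z) \<and>
      (\<forall>s\<in>{-A..A}. \<bar>g (z - s) - g z\<bar> \<le> e * g z) \<and>
      (\<integral>\<^sup>+t. indicator {A<..z-A} t * ennreal (g (z - t)) \<partial>G) \<le> ennreal (e' * g z)) at_top"
    using g_pos_ev ratio_ev[OF e(1), of B] ratio_ev[OF e(1), of A] A1(2) A(2)
    by (auto intro!: eventually_conj)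
  then obtain Z where Z: "\<And>z. z \<ge> Z \<Longrightarrow> g z > 0 \<and> (\<forall>s\<in>{-B..B}. \<bar>g (z - s) - g z\<bar> \<le> e * g z) \<and>
      (\<forall>s\<in>{-A..A}. \<bar>g (z - s) - g z\<bar> \<le> e * g z) \<and>
      (\<integral>\<^sup>+t. indicator {A<..z-A} t * ennreal (g (z - t)) \<partial>G) \<le> ennreal (e' * g z)"
    by (auto simp: eventually_at_top_linorder)
  have key: "g (x+y) > 0 \<and> (1 - \<epsilon>) * g (x+y) \<le> measure (F \<Otimes>\<^sub>M G) {p. fst p \<le> x \<and> fst p + snd p \<in> SI (x+y)} \<and>
     measure (F \<Otimes>\<^sub>M G) {p. fst p \<le> x \<and> fst p + snd p \<in> SI (x+y)} \<le> (1 + \<epsilon>) * g (x+y)" if xy: "max B Z \<le> x \<and> A \<le> y" for x y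
  proof -
    define z where "z = x + y"
    have zZ: "z \<ge> Z" using xy A unfolding z_def by auto
    note Zz = Z[OF zZ]
    have gz: "g z > 0" using Zz by simp
    have ratB: "s \<in> {0..B} \<Longrightarrow> \<bar>g (z - s) - g z\<bar> \<le> e * g z" for s using Zz by auto
    have ratA: "s \<in> {0..A} \<Longrightarrow> \<bar>g (z - s) - g z\<bar> \<le> e * g z" for s using Zz by auto
    define E where "E = {p::real\<times>real. fst p \<le> x \<and> fst p + snd p \<in> SI z}"
    define E1 where "E1 = {p::real\<times>real. fst p \<le> B \<and> fst p + snd p \<in> SI z}"
    define R1 where "R1 = {p::real\<times>real. A < snd p \<and> snd p \<le> z - A \<and> fst p + snd p \<in> SI z}"
    define R where "R = {p::real\<times>real. B < fst p \<and> z - A < snd p \<and> fst p + snd p \<in> SI z}"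
    have meas: "E \<in> sets (borel \<Otimes>\<^sub>M borel)" "E1 \<in> sets (borel \<Otimes>\<^sub>M borel)"
      "R1 \<in> sets (borel \<Otimes>\<^sub>M borel)" "R \<in> sets (borel \<Otimes>\<^sub>M borel)"
      unfolding E_def E1_def R1_def R_def by (rule pair_pred; measurable)+
    have "emeasure (F \<Otimes>\<^sub>M G) E = (\<integral>\<^sup>+s. emeasure G {t. (s,t) \<in> E} \<partial>F)"
      by (rule pair_s[OF Fp probG Fs setsG meas(1)])
    also have "\<dots> \<ge> (\<integral>\<^sup>+s. ennreal ((1 - e) * g z) * indicator {0..B} s \<partial>F)"
    proof (rule nn_integral_mono)
      fix s
      show "ennreal ((1 - e) * g z) * indicator {0..B} s \<le> emeasure G {t. (s, t) \<in> E}"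
      proof (cases "s \<in> {0..B}")
        case True
        then have "s \<le> x" using xy by auto
        then have "{t. (s, t) \<in> E} = SI (z - s)" unfolding E_def using shift_int_minus2[of s z T] by auto
        moreover have "(1 - e) * g z \<le> g (z - s)" using ratB[OF True] by (simp add: algebra_simps)
        ultimately show ?thesis using True by (simp add: emeasure_g ennreal_leI)
      qed simp
    qed
    also have "(\<integral>\<^sup>+s. ennreal ((1 - e) * g z) * indicator {0..B} s \<partial>F) = ennreal ((1 - e) * g z) * emeasure F {0..B}"
      by (rule nn_integral_cmult_indicator) (simp add: Fs)
    also have "\<dots> = ennreal ((1 - e) * g z * measure F {0..B})"
      using e gz by (simp add: F.emeasure_eq_measure ennreal_mult)
    finally have lowE: "ennreal ((1 - e) * g z * measure F {0..B}) \<le> ennreal (measure (F \<Otimes>\<^sub>M G) E)"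
      by (simp add: PP.emeasure_eq_measure)
    have "(1 - e) * g z * measure F {0..B} \<le> measure (F \<Otimes>\<^sub>M G) E"
      using lowE by (simp add: ennreal_le_iff)
    moreover have "(1 - e) * g z * (1 - e) \<le> (1 - e) * g z * measure F {0..B}"
      using FB e gz by (intro mult_left_mono) auto
    moreover have "(1 - \<epsilon>) * g z \<le> (1 - e) * g z * (1 - e)"
    proof -
      have "(1 - \<epsilon>) \<le> (1 - e) * (1 - e)" using e by (simp add: algebra_simps) (smt (verit) mult_nonneg_nonneg)
      then show ?thesis using gz by (simp add: mult.commute mult.left_commute mult_right_mono)
    qed
    ultimately have lower: "(1 - \<epsilon>) * g z \<le> measure (F \<Otimes>\<^sub>M G) E" by linarith
    have sub: "E \<subseteq> E1 \<union> R1 \<union> R"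
    proof
      fix p assume p: "p \<in> E"
      obtain s t where st: "p = (s, t)" by (cases p)
      have sx: "s \<le> x" and sI: "s + t \<in> SI z" using p st unfolding E_def by auto
      have "z < s + t" using shift_int_gt[OF sI] .
      then have ty: "t > y" using sx unfolding z_def by linarith
      show "p \<in> E1 \<union> R1 \<union> R"
        using st sx sI ty xy unfolding E1_def R1_def R_def by auto
    qed
    have u1: "emeasure (F \<Otimes>\<^sub>M G) E1 \<le> ennreal ((1 + e) * g z)"
    proof -
      have "emeasure (F \<Otimes>\<^sub>M G) E1 = (\<integral>\<^sup>+s. emeasure G {t. (s,t) \<in> E1} \<partial>F)"
        by (rule pair_s[OF Fp probG Fs setsG meas(2)])
      also have "\<dots> \<le> (\<integral>\<^sup>+s. ennreal ((1 + e) * g z) \<partial>F)"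
      proof (rule nn_integral_mono_AE)
        show "AE s in F. emeasure G {t. (s, t) \<in> E1} \<le> ennreal ((1 + e) * g z)"
          using Fnn
        proof eventually_elim
          case (elim s)
          show ?case
          proof (cases "s \<le> B")
            case True
            then have "{t. (s, t) \<in> E1} = SI (z - s)" unfolding E1_def using shift_int_minus2[of s z T] by auto
            moreover have "g (z - s) \<le> (1 + e) * g z" using ratB[of s] True elim by (simp add: algebra_simps)
            ultimately show ?thesis by (simp add: emeasure_g ennreal_leI)
          next
            case False
            then have "{t. (s, t) \<in> E1} = {}" unfolding E1_def by auto
            then show ?thesis by simp
          qed
        qed
      qed
      also have "\<dots> = ennreal ((1 + e) * g z)" using F.emeasure_space_1 by simp
      finally show ?thesis .
    qed
    have u2: "emeasure (F \<Otimes>\<^sub>M G) R1 \<le> ennreal (e * g z)"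
    proof -
      have "emeasure (F \<Otimes>\<^sub>M G) R1 = (\<integral>\<^sup>+t. emeasure F {s. (s,t) \<in> R1} \<partial>G)"
        by (rule pair_t[OF Fp probG Fs setsG meas(3)])
      also have "\<dots> \<le> (\<integral>\<^sup>+t. ennreal K' * (indicator {A<..z-A} t * ennreal (g (z - t))) \<partial>G)"
      proof (rule nn_integral_mono)
        fix t
        show "emeasure F {s. (s, t) \<in> R1} \<le> ennreal K' * (indicator {A<..z-A} t * ennreal (g (z - t)))"
        proof (cases "t \<in> {A<..z-A}")
          case True
          then have "{s. (s, t) \<in> R1} = SI (z - t)" unfolding R1_def using shift_int_minus[of t z T] by auto
          moreover have "emeasure F (SI (z - t)) \<le> ennreal (K' * g (z - t))" using kb True A by auto
          ultimately show ?thesis using True K' g_nonneg[of "z - t"] by (simp add: ennreal_mult)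
        next
          case False
          then have "{s. (s, t) \<in> R1} = {}" unfolding R1_def by auto
          then show ?thesis by simp
        qed
      qed
      also have "\<dots> = ennreal K' * (\<integral>\<^sup>+t. indicator {A<..z-A} t * ennreal (g (z - t)) \<partial>G)"
        by (rule nn_integral_cmult) measurable
      also have "\<dots> \<le> ennreal K' * ennreal (e' * g z)"
        using Zz by (intro mult_left_mono) auto
      also have "\<dots> = ennreal (K' * e' * g z)" using K' e' gz by (simp add: ennreal_mult[symmetric] mult.assoc)
      also have "\<dots> \<le> ennreal (e * g z)" using e'(2) gz by (intro ennreal_leI mult_right_mono) auto
      finally show ?thesis .
    qed
    have u3: "emeasure (F \<Otimes>\<^sub>M G) R \<le> ennreal ((1 + e) * g z * e)"
    proof -
      have "emeasure (F \<Otimes>\<^sub>M G) R = (\<integral>\<^sup>+s. emeasure G {t. (s,t) \<in> R} \<partial>F)"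
        by (rule pair_s[OF Fp probG Fs setsG meas(4)])
      also have "\<dots> \<le> (\<integral>\<^sup>+s. ennreal ((1 + e) * g z) * indicator {B<..} s \<partial>F)"
      proof (rule nn_integral_mono_AE)
        show "AE s in F. emeasure G {t. (s, t) \<in> R} \<le> ennreal ((1 + e) * g z) * indicator {B<..} s"
          using Fnn
        proof eventually_elim
          case (elim s)
          show ?case
          proof (cases "B < s")
            case True
            have "{t. (s, t) \<in> R} = SI (z - s) \<inter> {z - A<..}"
              unfolding R_def using True shift_int_minus2[of s z T] by auto
            also have "\<dots> \<subseteq> SI (max (z - s) (z - A))" by (rule shift_int_Int)
            also have "max (z - s) (z - A) = z - min s A" by (simp add: max_def min_def)
            finally have "emeasure G {t. (s, t) \<in> R} \<le> emeasure G (SI (z - min s A))"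
              using shift_int_borel by (intro emeasure_mono) auto
            also have "\<dots> = ennreal (g (z - min s A))" by (rule emeasure_g)
            also have "\<dots> \<le> ennreal ((1 + e) * g z)"
              using ratA[of "min s A"] elim A by (intro ennreal_leI) (auto simp: algebra_simps)
            finally show ?thesis using True by simp
          next
            case False
            then have "{t. (s, t) \<in> R} = {}" unfolding R_def by auto
            then show ?thesis by simp
          qed
        qed
      qed
      also have "\<dots> = ennreal ((1 + e) * g z) * emeasure F {B<..}"
        by (rule nn_integral_cmult_indicator) (simp add: Fs)
      also have "\<dots> \<le> ennreal ((1 + e) * g z) * ennreal e"
        using FBt by (intro mult_left_mono) (auto simp: F.emeasure_eq_measure ennreal_leI)
      also have "\<dots> = ennreal ((1 + e) * g z * e)" using e gz by (simp add: ennreal_mult)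
      finally show ?thesis .
    qed
    have "emeasure (F \<Otimes>\<^sub>M G) E \<le> emeasure (F \<Otimes>\<^sub>M G) (E1 \<union> R1 \<union> R)"
      using sub meas PPsets by (intro emeasure_mono) auto
    also have "\<dots> \<le> emeasure (F \<Otimes>\<^sub>M G) (E1 \<union> R1) + emeasure (F \<Otimes>\<^sub>M G) R"
      using meas PPsets by (intro emeasure_subadditive) auto
    also have "\<dots> \<le> emeasure (F \<Otimes>\<^sub>M G) E1 + emeasure (F \<Otimes>\<^sub>M G) R1 + emeasure (F \<Otimes>\<^sub>M G) R"
      using meas PPsets by (intro add_right_mono emeasure_subadditive) auto
    also have "\<dots> \<le> ennreal ((1 + e) * g z) + ennreal (e * g z) + ennreal ((1 + e) * g z * e)"
      using u1 u2 u3 by (intro add_mono) auto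
    also have "\<dots> = ennreal ((1 + e) * g z + e * g z + (1 + e) * g z * e)"
      using e gz by (simp add: ennreal_plus[symmetric] del: ennreal_plus)
    finally have eE: "emeasure (F \<Otimes>\<^sub>M G) E \<le> ennreal ((1 + e) * g z + e * g z + (1 + e) * g z * e)" .
    have S0: "0 \<le> (1 + e) * g z + e * g z + (1 + e) * g z * e" using e gz by simp
    have "ennreal (measure (F \<Otimes>\<^sub>M G) E) \<le> ennreal ((1 + e) * g z + e * g z + (1 + e) * g z * e)"
      using eE by (simp only: PP.emeasure_eq_measure)
    then have "measure (F \<Otimes>\<^sub>M G) E \<le> (1 + e) * g z + e * g z + (1 + e) * g z * e"
      using S0 by (subst (asm) ennreal_le_iff) auto
    also have "\<dots> \<le> (1 + \<epsilon>) * g z"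
    proof -
      have "(1 + e) * g z + e * g z + (1 + e) * g z * e = (1 + 3 * e + e * e) * g z" by (simp add: algebra_simps)
      also have "\<dots> \<le> (1 + \<epsilon>) * g z"
      proof (rule mult_right_mono)
        have "e * e \<le> e * 1" using e by (intro mult_left_mono) auto
        then show "1 + 3 * e + e * e \<le> 1 + \<epsilon>" using e by linarith
      qed (use gz in auto)
      finally show ?thesis .
    qed
    finally have upper: "measure (F \<Otimes>\<^sub>M G) E \<le> (1 + \<epsilon>) * g z" .
    show ?thesis
      using gz lower upper unfolding E_def z_def by simp
  qed
  show ?thesis using key by blast
qed

end



locale walk = sdelta T G for T G +
  fixes M :: "'a measure" and \<zeta> :: "nat \<Rightarrow> 'a \<Rightarrow> real" and \<tau> :: "'a \<Rightarrow> nat"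
  assumes PM: "prob_space M"
    and zm: "\<And>i. \<zeta> i \<in> borel_measurable M"
    and znn: "\<And>i \<omega>. 0 \<le> \<zeta> i \<omega>"
    and zind: "prob_space.indep_vars M (\<lambda>_. borel) \<zeta> UNIV"
    and zd: "\<And>i. distr M borel (\<zeta> i) = G"
    and tm: "\<tau> \<in> measurable M (count_space UNIV)"
    and tind: "prob_space.indep_vars M (\<lambda>_. borel)
           (\<lambda>j \<omega>. case j of None \<Rightarrow> real (\<tau> \<omega>) | Some i \<Rightarrow> \<zeta> i \<omega>) UNIV"
begin

interpretation M: prob_space M by (rule PM)

abbreviation S :: "nat \<Rightarrow> 'a \<Rightarrow> real" where "S \<equiv> psum \<zeta>"

lemma S_meas[measurable]: "S m \<in> borel_measurable M"
  unfolding psum_def by (measurable; rule zm)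

lemma Ssum: "(\<lambda>f. \<Sum>i<m. f i) \<in> PiM {..<m} (\<lambda>_. borel) \<rightarrow>\<^sub>M (borel :: real measure)"
  by (rule borel_measurable_sum) (auto intro!: measurable_component_singleton)

lemma indep_S_zeta: "M.indep_var borel (S m) borel (\<zeta> m)"
proof -
  have "M.indep_var (PiM {..<m} (\<lambda>_. borel)) (\<lambda>\<omega>. restrict (\<lambda>i. \<zeta> i \<omega>) {..<m})
      (PiM {m} (\<lambda>_. borel)) (\<lambda>\<omega>. restrict (\<lambda>i. \<zeta> i \<omega>) {m})"
    by (rule M.indep_var_restrict[OF zind]) auto
  then have "M.indep_var borel ((\<lambda>f. \<Sum>i<m. f i) \<circ> (\<lambda>\<omega>. restrict (\<lambda>i. \<zeta> i \<omega>) {..<m}))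
      borel ((\<lambda>f. f m) \<circ> (\<lambda>\<omega>. restrict (\<lambda>i. \<zeta> i \<omega>) {m}))"
    by (rule M.indep_var_compose[OF _ Ssum]) (auto intro!: measurable_component_singleton)
  moreover have "((\<lambda>f. \<Sum>i<m. f i) \<circ> (\<lambda>\<omega>. restrict (\<lambda>i. \<zeta> i \<omega>) {..<m})) = S m"
    by (auto simp: psum_def fun_eq_iff)
  moreover have "((\<lambda>f. f m) \<circ> (\<lambda>\<omega>. restrict (\<lambda>i. \<zeta> i \<omega>) {m})) = \<zeta> m"
    by (auto simp: fun_eq_iff)
  ultimately show ?thesis by simp
qed

definition F :: "nat \<Rightarrow> real measure" where "F m = distr M borel (S m)"

lemma F_prob: "prob_space (F m)" unfolding F_def by (rule M.prob_space_distr) simp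
lemma F_sets: "sets (F m) = sets borel" unfolding F_def by simp
lemma F_nn: "AE s in F m. 0 \<le> s"
  unfolding F_def by (subst AE_distr_iff) (auto simp: psum_def znn intro!: sum_nonneg)

lemma joint: "distr M (borel \<Otimes>\<^sub>M borel) (\<lambda>\<omega>. (S m \<omega>, \<zeta> m \<omega>)) = F m \<Otimes>\<^sub>M G"
  using indep_S_zeta[of m] unfolding M.indep_var_distribution_eq F_def zd by simp

lemma F0: "0 \<le> w \<Longrightarrow> emeasure (F 0) (SI w) = 0"
proof -
  assume w: "0 \<le> w"
  have "S 0 -` SI w \<inter> space M = {}" using w shift_int_gt[of 0 w T] by (auto simp: psum_def)
  then show ?thesis unfolding F_def by (subst emeasure_distr) auto
qed

lemma pair_event: "E \<in> sets (borel \<Otimes>\<^sub>M borel) \<Longrightarrow>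
   emeasure M {\<omega> \<in> space M. (S m \<omega>, \<zeta> m \<omega>) \<in> E} = emeasure (F m \<Otimes>\<^sub>M G) E"
proof -
  assume E: "E \<in> sets (borel \<Otimes>\<^sub>M borel)"
  have "emeasure (F m \<Otimes>\<^sub>M G) E = emeasure (distr M (borel \<Otimes>\<^sub>M borel) (\<lambda>\<omega>. (S m \<omega>, \<zeta> m \<omega>))) E"
    by (simp add: joint)
  also have "\<dots> = emeasure M ((\<lambda>\<omega>. (S m \<omega>, \<zeta> m \<omega>)) -` E \<inter> space M)"
    using E by (intro emeasure_distr) (auto intro!: measurable_Pair zm)
  finally show ?thesis by (simp add: vimage_def Int_def conj_commute)
qed

lemma Frec: "emeasure (F (Suc m)) (SI w) = emeasure (F m \<Otimes>\<^sub>M G) {p. fst p + snd p \<in> SI w}"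
proof -
  have E: "{p::real\<times>real. fst p + snd p \<in> SI w} \<in> sets (borel \<Otimes>\<^sub>M borel)"
    by (rule pair_pred) measurable
  have "emeasure (F (Suc m)) (SI w) = emeasure M (S (Suc m) -` SI w \<inter> space M)"
    unfolding F_def by (intro emeasure_distr) auto
  also have "S (Suc m) -` SI w \<inter> space M = {\<omega> \<in> space M. (S m \<omega>, \<zeta> m \<omega>) \<in> {p. fst p + snd p \<in> SI w}}"
    by (auto simp: psum_def)
  finally show ?thesis using pair_event[OF E] by simp
qed

lemma Ysum: "(\<lambda>f. (\<Sum>i<(m::nat). f (Some i), f (Some m))) \<in> PiM (Some ` {..m}) (\<lambda>_. borel) \<rightarrow>\<^sub>M (borel \<Otimes>\<^sub>M borel :: (real \<times> real) measure)"
  by (intro measurable_Pair borel_measurable_sum measurable_component_singleton) auto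

lemma indep_tau: "M.indep_var (borel \<Otimes>\<^sub>M borel) (\<lambda>\<omega>. (real (\<tau> \<omega>), 0::real)) (borel \<Otimes>\<^sub>M borel) (\<lambda>\<omega>. (S m \<omega>, \<zeta> m \<omega>))"
proof -
  let ?X = "\<lambda>j \<omega>. case j of None \<Rightarrow> real (\<tau> \<omega>) | Some i \<Rightarrow> \<zeta> i \<omega>"
  have "M.indep_var (PiM {None} (\<lambda>_. borel)) (\<lambda>\<omega>. restrict (\<lambda>i. ?X i \<omega>) {None})
      (PiM (Some ` {..m}) (\<lambda>_. borel)) (\<lambda>\<omega>. restrict (\<lambda>i. ?X i \<omega>) (Some ` {..m}))"
    by (rule M.indep_var_restrict[OF tind]) auto
  then have "M.indep_var (borel \<Otimes>\<^sub>M borel) ((\<lambda>f. (f None, 0::real)) \<circ> (\<lambda>\<omega>. restrict (\<lambda>i. ?X i \<omega>) {None}))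
      (borel \<Otimes>\<^sub>M borel) ((\<lambda>f. (\<Sum>i<m. f (Some i), f (Some m))) \<circ> (\<lambda>\<omega>. restrict (\<lambda>i. ?X i \<omega>) (Some ` {..m})))"
    by (rule M.indep_var_compose[OF _ _ Ysum]) (auto intro!: measurable_component_singleton measurable_Pair)
  moreover have "((\<lambda>f. (f None, 0::real)) \<circ> (\<lambda>\<omega>. restrict (\<lambda>i. ?X i \<omega>) {None})) = (\<lambda>\<omega>. (real (\<tau> \<omega>), 0::real))"
    by (auto simp: fun_eq_iff)
  moreover have "((\<lambda>f. (\<Sum>i<m. f (Some i), f (Some m))) \<circ> (\<lambda>\<omega>. restrict (\<lambda>i. ?X i \<omega>) (Some ` {..m}))) = (\<lambda>\<omega>. (S m \<omega>, \<zeta> m \<omega>))"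
    by (auto simp: fun_eq_iff psum_def)
  ultimately show ?thesis by simp
qed

lemma tau_factor:
  assumes E: "E \<in> sets (borel \<Otimes>\<^sub>M borel)"
  shows "measure M {\<omega> \<in> space M. m < \<tau> \<omega> \<and> (S m \<omega>, \<zeta> m \<omega>) \<in> E} =
    measure M {\<omega> \<in> space M. m < \<tau> \<omega>} * measure (F m \<Otimes>\<^sub>M G) E"
proof -
  have ind: "M.indep_set (sigma_sets (space M) {(\<lambda>\<omega>. (real (\<tau> \<omega>), 0::real)) -` A \<inter> space M | A. A \<in> sets (borel \<Otimes>\<^sub>M borel)})
     (sigma_sets (space M) {(\<lambda>\<omega>. (S m \<omega>, \<zeta> m \<omega>)) -` A \<inter> space M | A. A \<in> sets (borel \<Otimes>\<^sub>M borel)})"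
    using indep_tau[of m] unfolding M.indep_var_eq by blast
  have a: "(\<lambda>\<omega>. (real (\<tau> \<omega>), 0::real)) -` ({real m<..} \<times> UNIV) \<inter> space M \<in> sigma_sets (space M) {(\<lambda>\<omega>. (real (\<tau> \<omega>), 0::real)) -` A \<inter> space M | A. A \<in> sets (borel \<Otimes>\<^sub>M borel)}"
  proof (intro sigma_sets.Basic CollectI exI conjI)
    show "{real m<..} \<times> UNIV \<in> sets (borel \<Otimes>\<^sub>M (borel :: real measure))"
      using pair_measureI[of "{real m<..}" borel UNIV borel] by simp
  qed simp
  have b: "(\<lambda>\<omega>. (S m \<omega>, \<zeta> m \<omega>)) -` E \<inter> space M \<in> sigma_sets (space M) {(\<lambda>\<omega>. (S m \<omega>, \<zeta> m \<omega>)) -` A \<inter> space M | A. A \<in> sets (borel \<Otimes>\<^sub>M borel)}"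
    using E by (intro sigma_sets.Basic) blast
  have "measure M (((\<lambda>\<omega>. (real (\<tau> \<omega>), 0::real)) -` ({real m<..} \<times> UNIV) \<inter> space M) \<inter> ((\<lambda>\<omega>. (S m \<omega>, \<zeta> m \<omega>)) -` E \<inter> space M))
     = measure M ((\<lambda>\<omega>. (real (\<tau> \<omega>), 0::real)) -` ({real m<..} \<times> UNIV) \<inter> space M) * measure M ((\<lambda>\<omega>. (S m \<omega>, \<zeta> m \<omega>)) -` E \<inter> space M)"
    by (rule M.indep_setD[OF ind a b])
  moreover have "measure M ((\<lambda>\<omega>. (S m \<omega>, \<zeta> m \<omega>)) -` E \<inter> space M) = measure (F m \<Otimes>\<^sub>M G) E"
  proof -
    have "emeasure M ((\<lambda>\<omega>. (S m \<omega>, \<zeta> m \<omega>)) -` E \<inter> space M) = emeasure (F m \<Otimes>\<^sub>M G) E"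
      using pair_event[OF E, of m] by (simp add: vimage_def Int_def conj_commute)
    then show ?thesis by (simp add: measure_def)
  qed
  ultimately show ?thesis by (simp add: vimage_def Int_def conj_commute conj_left_commute)
qed

lemma S_Suc: "S (Suc m) \<omega> = S m \<omega> + \<zeta> m \<omega>" by (simp add: psum_def)
lemma S_0: "S 0 \<omega> = 0" by (simp add: psum_def)
lemma S_mono: "m \<le> n \<Longrightarrow> S m \<omega> \<le> S n \<omega>"
  unfolding psum_def by (rule sum_mono2) (auto simp: znn)

lemma SI_shift: "a - x \<in> SI y \<longleftrightarrow> a \<in> SI (x + y)"
  by (cases T) (auto simp: shift_int_def algebra_simps)

definition Em :: "real \<Rightarrow> real \<Rightarrow> (real \<times> real) set" where
  "Em x y = {p. fst p \<le> x \<and> fst p + snd p \<in> SI (x+y)}"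

lemma Em_sets: "Em x y \<in> sets (borel \<Otimes>\<^sub>M borel)"
  unfolding Em_def by (rule pair_pred) measurable

definition Am :: "real \<Rightarrow> real \<Rightarrow> nat \<Rightarrow> 'a set" where
  "Am x y m = {\<omega> \<in> space M. m < \<tau> \<omega> \<and> (S m \<omega>, \<zeta> m \<omega>) \<in> Em x y}"

lemma event_decomp:
  assumes x: "0 \<le> x" and y: "0 \<le> y"
  shows "{\<omega> \<in> space M. (\<exists>n. 1 \<le> n \<and> x < S n \<omega>) \<and> first_passage \<zeta> x \<omega> \<le> \<tau> \<omega> \<and>
      overshoot \<zeta> x \<omega> \<in> SI y} = (\<Union>m. Am x y m)"
proof (intro set_eqI iffI)
  fix \<omega> assume w: "\<omega> \<in> {\<omega> \<in> space M. (\<exists>n. 1 \<le> n \<and> x < S n \<omega>) \<and> first_passage \<zeta> x \<omega> \<le> \<tau> \<omega> \<and>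
      overshoot \<zeta> x \<omega> \<in> SI y}"
  define n0 where "n0 = first_passage \<zeta> x \<omega>"
  have ex: "\<exists>n. 1 \<le> n \<and> x < S n \<omega>" using w by auto
  have n0: "1 \<le> n0 \<and> x < S n0 \<omega>" unfolding n0_def first_passage_def by (rule LeastI_ex[OF ex])
  obtain m where m: "n0 = Suc m" using n0 by (cases n0) auto
  have Sm: "S m \<omega> \<le> x"
  proof (cases "m = 0")
    case True then show ?thesis using x by (simp add: S_0)
  next
    case False
    have "\<not> (1 \<le> m \<and> x < S m \<omega>)"
      using not_less_Least[of m "\<lambda>n. 1 \<le> n \<and> x < S n \<omega>"] m unfolding n0_def first_passage_def by auto
    then show ?thesis using False by auto
  qed
  have "S n0 \<omega> - x \<in> SI y" using w unfolding overshoot_def n0_def by auto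
  then have "S m \<omega> + \<zeta> m \<omega> \<in> SI (x + y)" unfolding SI_shift m S_Suc .
  moreover have "m < \<tau> \<omega>" using w m unfolding n0_def by auto
  ultimately have "\<omega> \<in> Am x y m" using w Sm unfolding Am_def Em_def by auto
  then show "\<omega> \<in> (\<Union>m. Am x y m)" by blast
next
  fix \<omega> assume "\<omega> \<in> (\<Union>m. Am x y m)"
  then obtain m where w: "\<omega> \<in> space M" "m < \<tau> \<omega>" "S m \<omega> \<le> x" "S m \<omega> + \<zeta> m \<omega> \<in> SI (x + y)"
    unfolding Am_def Em_def by auto
  have "x + y < S (Suc m) \<omega>" using shift_int_gt[OF w(4)] by (simp add: S_Suc)
  then have xs: "x < S (Suc m) \<omega>" using y by linarith
  have fp: "first_passage \<zeta> x \<omega> = Suc m"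
    unfolding first_passage_def
  proof (rule Least_equality)
    show "1 \<le> Suc m \<and> x < S (Suc m) \<omega>" using xs by simp
    fix n assume n: "1 \<le> n \<and> x < S n \<omega>"
    show "Suc m \<le> n"
    proof (rule ccontr)
      assume "\<not> Suc m \<le> n"
      then have "S n \<omega> \<le> S m \<omega>" by (intro S_mono) auto
      then show False using n w(3) by linarith
    qed
  qed
  have "overshoot \<zeta> x \<omega> \<in> SI y"
    unfolding overshoot_def fp SI_shift S_Suc using w(4) .
  then show "\<omega> \<in> {\<omega> \<in> space M. (\<exists>n. 1 \<le> n \<and> x < S n \<omega>) \<and> first_passage \<zeta> x \<omega> \<le> \<tau> \<omega> \<and>
      overshoot \<zeta> x \<omega> \<in> SI y}"
    using w xs fp by auto
qed

lemma Am_disj: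
  assumes y: "0 \<le> y"
  shows "disjoint_family (Am x y)"
proof -
  have h: "S k \<omega> \<le> x \<and> x < S (Suc k) \<omega>" if "\<omega> \<in> Am x y k" for k \<omega>
  proof -
    have a: "S k \<omega> \<le> x" using that unfolding Am_def Em_def by auto
    have "S k \<omega> + \<zeta> k \<omega> \<in> SI (x + y)" using that unfolding Am_def Em_def by auto
    then have "x + y < S (Suc k) \<omega>" using shift_int_gt by (simp add: S_Suc)
    then show ?thesis using a y by linarith
  qed
  have c: "False" if "\<omega> \<in> Am x y m" "\<omega> \<in> Am x y n" "m < n" for \<omega> m n
  proof -
    have "S (Suc m) \<omega> \<le> S n \<omega>" using that(3) by (intro S_mono) auto
    then show False using h[OF that(1)] h[OF that(2)] by linarith
  qed
  show ?thesis unfolding disjoint_family_on_def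
  proof (intro ballI impI)
    fix m n :: nat assume "m \<noteq> n"
    then have "m < n \<or> n < m" by arith
    then show "Am x y m \<inter> Am x y n = {}" using c by blast
  qed
qed

lemma tm'[measurable]: "\<tau> \<in> measurable M (count_space UNIV)" by (rule tm)
lemma zm'[measurable]: "\<zeta> i \<in> borel_measurable M" by (rule zm)

definition pt :: "nat \<Rightarrow> real" where "pt m = measure M {\<omega> \<in> space M. m < \<tau> \<omega>}"

lemma pt_nonneg: "0 \<le> pt m" by (simp add: pt_def)

lemma Am_sets: "Am x y m \<in> sets M"
proof -
  have mp: "(\<lambda>\<omega>. (S m \<omega>, \<zeta> m \<omega>)) \<in> M \<rightarrow>\<^sub>M borel \<Otimes>\<^sub>M borel" by measurable
  have "(\<lambda>\<omega>. (S m \<omega>, \<zeta> m \<omega>)) -` Em x y \<inter> space M \<in> sets M" by (rule measurable_sets[OF mp Em_sets])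
  moreover have "(\<lambda>\<omega>. (S m \<omega>, \<zeta> m \<omega>)) -` Em x y \<inter> space M = {\<omega> \<in> space M. (S m \<omega>, \<zeta> m \<omega>) \<in> Em x y}" by auto
  ultimately have "{\<omega> \<in> space M. (S m \<omega>, \<zeta> m \<omega>) \<in> Em x y} \<in> sets M" by simp
  moreover have "{\<omega> \<in> space M. m < \<tau> \<omega>} \<in> sets M" by measurable
  ultimately have "{\<omega> \<in> space M. m < \<tau> \<omega>} \<inter> {\<omega> \<in> space M. (S m \<omega>, \<zeta> m \<omega>) \<in> Em x y} \<in> sets M" by auto
  moreover have "Am x y m = {\<omega> \<in> space M. m < \<tau> \<omega>} \<inter> {\<omega> \<in> space M. (S m \<omega>, \<zeta> m \<omega>) \<in> Em x y}"
    unfolding Am_def by auto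
  ultimately show ?thesis by simp
qed

lemma Am_measure: "measure M (Am x y m) = pt m * measure (F m \<Otimes>\<^sub>M G) (Em x y)"
  unfolding Am_def pt_def using tau_factor[OF Em_sets] .

lemma event_sums:
  assumes "0 \<le> x" "0 \<le> y"
  shows "(\<lambda>m. pt m * measure (F m \<Otimes>\<^sub>M G) (Em x y)) sums
    measure M {\<omega> \<in> space M. (\<exists>n. 1 \<le> n \<and> x < S n \<omega>) \<and> first_passage \<zeta> x \<omega> \<le> \<tau> \<omega> \<and> overshoot \<zeta> x \<omega> \<in> SI y}"
  unfolding event_decomp[OF assms] Am_measure[symmetric]
  by (rule measure_UNION) (use Am_sets Am_disj[OF assms(2)] M.emeasure_finite in auto)

lemma pt_bound:
  fixes \<delta> :: real
  assumes d: "\<delta> > 0" and int: "integrable M (\<lambda>\<omega>. (1 + \<delta>) ^ \<tau> \<omega>)"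
  shows "pt m * (1 + \<delta>) ^ Suc m \<le> M.expectation (\<lambda>\<omega>. (1 + \<delta>) ^ \<tau> \<omega>)"
proof -
  let ?A = "{\<omega> \<in> space M. m < \<tau> \<omega>}"
  have As: "?A \<in> sets M" by measurable
  have "pt m * (1 + \<delta>) ^ Suc m = M.expectation (\<lambda>\<omega>. (1 + \<delta>) ^ Suc m * indicator ?A \<omega>)"
    using As by (simp add: pt_def mult.commute)
  also have "\<dots> \<le> M.expectation (\<lambda>\<omega>. (1 + \<delta>) ^ \<tau> \<omega>)"
  proof (rule integral_mono)
    show "integrable M (\<lambda>\<omega>. (1 + \<delta>) ^ Suc m * indicator ?A \<omega>)"
      using As M.emeasure_finite by (intro integrable_mult_right integrable_real_indicator) (auto simp: M.emeasure_eq_measure)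
    show "integrable M (\<lambda>\<omega>. (1 + \<delta>) ^ \<tau> \<omega>)" by (rule int)
    fix \<omega> assume "\<omega> \<in> space M"
    show "(1 + \<delta>) ^ Suc m * indicator ?A \<omega> \<le> (1 + \<delta>) ^ \<tau> \<omega>"
    proof (cases "\<omega> \<in> ?A")
      case True
      then have "Suc m \<le> \<tau> \<omega>" by auto
      then have "(1 + \<delta>) ^ Suc m \<le> (1 + \<delta>) ^ \<tau> \<omega>" using d by (intro power_increasing) auto
      then show ?thesis using True by simp
    qed (use d in simp)
  qed
  finally show ?thesis .
qed

lemma pt_summable_exp:
  fixes \<delta> :: real
  assumes d: "\<delta> > 0" and int: "integrable M (\<lambda>\<omega>. (1 + \<delta>) ^ \<tau> \<omega>)"
    and q: "0 \<le> q" "q < 1 + \<delta>"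
  shows "summable (\<lambda>m. pt m * q ^ Suc m)"
proof (rule summable_comparison_test)
  let ?C = "M.expectation (\<lambda>\<omega>. (1 + \<delta>) ^ \<tau> \<omega>)"
  show "\<exists>N. \<forall>n\<ge>N. norm (pt n * q ^ Suc n) \<le> ?C * (q / (1 + \<delta>)) ^ Suc n"
  proof (intro exI allI impI)
    fix n :: nat
    have "pt n * q ^ Suc n = (pt n * (1 + \<delta>) ^ Suc n) * (q / (1 + \<delta>)) ^ Suc n"
      using d by (simp add: power_divide)
    also have "\<dots> \<le> ?C * (q / (1 + \<delta>)) ^ Suc n"
      using pt_bound[OF d int, of n] q d by (intro mult_right_mono) auto
    finally show "norm (pt n * q ^ Suc n) \<le> ?C * (q / (1 + \<delta>)) ^ Suc n"
      using pt_nonneg[of n] q by simp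
  qed
  have "summable (\<lambda>n. (q / (1 + \<delta>)) ^ Suc n)"
    using q d by (subst summable_Suc_iff) (auto intro!: summable_geometric)
  then show "summable (\<lambda>n. ?C * (q / (1 + \<delta>)) ^ Suc n)" by (rule summable_mult)
qed

lemma expect_tau:
  fixes \<delta> :: real
  assumes d: "\<delta> > 0" and int: "integrable M (\<lambda>\<omega>. (1 + \<delta>) ^ \<tau> \<omega>)"
  shows "summable pt" and "M.expectation (\<lambda>\<omega>. real (\<tau> \<omega>)) = suminf pt"
proof -
  have "summable (\<lambda>m. pt m * 1 ^ Suc m)" using pt_summable_exp[OF d int, of 1] d by simp
  then show sp: "summable pt" by simp
  let ?f = "\<lambda>m \<omega>. indicator {\<omega> \<in> space M. m < \<tau> \<omega>} \<omega> :: real"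
  have fi: "integrable M (?f m)" for m using M.emeasure_finite by (intro integrable_real_indicator) (auto simp: M.emeasure_eq_measure)
  have ip: "integral\<^sup>L M (?f m) = pt m" for m by (simp add: pt_def)
  have pw: "(\<Sum>m. ?f m \<omega>) = real (\<tau> \<omega>)" if "\<omega> \<in> space M" for \<omega>
  proof -
    have "(\<Sum>m. ?f m \<omega>) = (\<Sum>m\<in>{..<\<tau> \<omega>}. ?f m \<omega>)"
      by (rule suminf_finite) (use that in auto)
    also have "\<dots> = (\<Sum>m\<in>{..<\<tau> \<omega>}. 1)" using that by (intro sum.cong) auto
    finally show ?thesis by simp
  qed
  have "M.expectation (\<lambda>\<omega>. real (\<tau> \<omega>)) = M.expectation (\<lambda>\<omega>. \<Sum>m. ?f m \<omega>)"
    using pw by (intro Bochner_Integration.integral_cong) auto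
  also have "\<dots> = (\<Sum>m. integral\<^sup>L M (?f m))"
  proof (rule integral_suminf)
    show "integrable M (?f m)" for m by (rule fi)
    show "AE x in M. summable (\<lambda>i. norm (?f i x))"
    proof (rule AE_I2)
      fix \<omega> assume "\<omega> \<in> space M"
      show "summable (\<lambda>i. norm (?f i \<omega>))"
        by (rule summable_finite[of "{..<\<tau> \<omega>}"]) auto
    qed
    show "summable (\<lambda>i. \<integral>x. norm (?f i x) \<partial>M)" using sp ip by simp
  qed
  also have "\<dots> = suminf pt" using ip by simp
  finally show "M.expectation (\<lambda>\<omega>. real (\<tau> \<omega>)) = suminf pt" .
qed

lemma ev_prod: fixes X Y :: real shows "(\<And>x y. X \<le> x \<Longrightarrow> Y \<le> y \<Longrightarrow> P (x, y)) \<Longrightarrow> eventually P (at_top \<times>\<^sub>F (at_top :: real filter))"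
proof -
  assume h: "\<And>x y. X \<le> x \<Longrightarrow> Y \<le> y \<Longrightarrow> P (x, y)"
  have "eventually (\<lambda>p. X \<le> fst p \<and> Y \<le> snd p) (at_top \<times>\<^sub>F at_top)"
    by (rule eventually_prodI) (auto intro: eventually_ge_at_top)
  then show ?thesis by eventually_elim (metis h prod.collapse)
qed

lemma main_limit:
  fixes \<delta> :: real
  assumes d: "\<delta> > 0" and int: "integrable M (\<lambda>\<omega>. (1 + \<delta>) ^ \<tau> \<omega>)"
  shows "((\<lambda>(x, y). measure M {\<omega> \<in> space M. (\<exists>n. 1 \<le> n \<and> x < S n \<omega>) \<and>
              first_passage \<zeta> x \<omega> \<le> \<tau> \<omega> \<and> overshoot \<zeta> x \<omega> \<in> SI y} / g (x + y))
          \<longlongrightarrow> M.expectation (\<lambda>\<omega>. real (\<tau> \<omega>))) (at_top \<times>\<^sub>F at_top)"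
proof -
  define \<epsilon> where "\<epsilon> = min (\<delta>/2) 1"
  have eps: "0 < \<epsilon>" "\<epsilon> \<le> 1" "1 + \<epsilon> < 1 + \<delta>" using d by (auto simp: \<epsilon>_def)
  obtain A K where AK: "0 \<le> A" "0 \<le> K" "\<forall>m w. A \<le> w \<longrightarrow> emeasure (F m) (SI w) \<le> ennreal (K * (1+\<epsilon>)^m * g w)"
    using kesten[OF F_prob F_sets F_nn F0 Frec eps(1,2)] by blast
  define a where "a k = (\<lambda>(x, y). pt k * measure (F k \<Otimes>\<^sub>M G) (Em x y) / g (x + y))" for k
  have lim: "((\<lambda>n. a k n) \<longlongrightarrow> pt k) (at_top \<times>\<^sub>F at_top)" for k
  proof -
    have K': "0 \<le> K * (1+\<epsilon>)^k" using AK eps by simp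
    have kb: "\<forall>w\<ge>A. emeasure (F k) (SI w) \<le> ennreal (K * (1+\<epsilon>)^k * g w)" using AK by auto
    have r: "((\<lambda>(x, y). measure (F k \<Otimes>\<^sub>M G) (Em x y) / g (x + y)) \<longlongrightarrow> 1) (at_top \<times>\<^sub>F at_top)"
    proof (rule tendstoI)
      fix \<eta> :: real assume \<eta>: "\<eta> > 0"
      obtain X Y where XY: "\<forall>x y. X \<le> x \<and> Y \<le> y \<longrightarrow> g (x+y) > 0 \<and>
         (1 - \<eta>/2) * g (x+y) \<le> measure (F k \<Otimes>\<^sub>M G) {p. fst p \<le> x \<and> fst p + snd p \<in> SI (x+y)} \<and>
         measure (F k \<Otimes>\<^sub>M G) {p. fst p \<le> x \<and> fst p + snd p \<in> SI (x+y)} \<le> (1 + \<eta>/2) * g (x+y)"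
        using fixed_bounds[OF F_prob F_sets F_nn AK(1) K' kb, of "\<eta>/2"] \<eta> by auto
      show "eventually (\<lambda>n. dist ((\<lambda>(x, y). measure (F k \<Otimes>\<^sub>M G) (Em x y) / g (x + y)) n) 1 < \<eta>) (at_top \<times>\<^sub>F at_top)"
      proof (rule ev_prod)
        fix x y assume "X \<le> x" "Y \<le> y"
        then have b: "g (x+y) > 0" "(1 - \<eta>/2) * g (x+y) \<le> measure (F k \<Otimes>\<^sub>M G) (Em x y)"
            "measure (F k \<Otimes>\<^sub>M G) (Em x y) \<le> (1 + \<eta>/2) * g (x+y)"
          using XY unfolding Em_def by auto
        have "(1 - \<eta>/2) \<le> measure (F k \<Otimes>\<^sub>M G) (Em x y) / g (x + y)"
          using b by (simp add: le_divide_eq)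
        moreover have "measure (F k \<Otimes>\<^sub>M G) (Em x y) / g (x + y) \<le> 1 + \<eta>/2"
          using b by (simp add: divide_le_eq)
        ultimately show "dist ((\<lambda>(x, y). measure (F k \<Otimes>\<^sub>M G) (Em x y) / g (x + y)) (x, y)) 1 < \<eta>"
          using \<eta> by (simp add: dist_real_def abs_le_iff)
      qed
    qed
    have "((\<lambda>n. pt k * (\<lambda>(x, y). measure (F k \<Otimes>\<^sub>M G) (Em x y) / g (x + y)) n) \<longlongrightarrow> pt k * 1) (at_top \<times>\<^sub>F at_top)"
      by (intro tendsto_mult tendsto_const r)
    then show ?thesis unfolding a_def by (simp add: case_prod_beta)
  qed
  obtain X1 where X1: "\<And>z. z \<ge> X1 \<Longrightarrow> g z > 0" using g_pos_ev by (auto simp: eventually_at_top_linorder)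
  define Mb where "Mb k = pt k * (1 + \<epsilon>) ^ Suc k * K" for k
  have bound: "eventually (\<lambda>(k, n). norm (a k n) \<le> Mb k) (at_top \<times>\<^sub>F (at_top \<times>\<^sub>F at_top))"
  proof -
    have "eventually (\<lambda>n. \<forall>k. norm (a k n) \<le> Mb k) (at_top \<times>\<^sub>F at_top)"
    proof (rule ev_prod)
      fix x y :: real assume x: "max A X1 \<le> x" and y: "0 \<le> y"
      have gz: "g (x + y) > 0" using X1 x y by auto
      show "\<forall>k. norm (a k (x, y)) \<le> Mb k"
      proof
        fix k
        interpret PP: prob_space "F k \<Otimes>\<^sub>M G" by (simp add: F_prob probG prob_space_pair)
        have "emeasure (F k \<Otimes>\<^sub>M G) (Em x y) \<le> emeasure (F k \<Otimes>\<^sub>M G) {p. fst p + snd p \<in> SI (x + y)}"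
        proof (rule emeasure_mono)
          show "Em x y \<subseteq> {p. fst p + snd p \<in> SI (x + y)}" unfolding Em_def by auto
          have "{p::real\<times>real. fst p + snd p \<in> SI (x + y)} \<in> sets (borel \<Otimes>\<^sub>M borel)" by (rule pair_pred) measurable
          then show "{p. fst p + snd p \<in> SI (x + y)} \<in> sets (F k \<Otimes>\<^sub>M G)"
            using sets_pair_measure_cong[OF F_sets setsG] by simp
        qed
        also have "\<dots> = emeasure (F (Suc k)) (SI (x + y))" by (rule Frec[symmetric])
        also have "\<dots> \<le> ennreal (K * (1+\<epsilon>)^Suc k * g (x + y))"
          using AK(3)[rule_format, of "x + y" "Suc k"] x y AK(1) by linarith
        finally have "measure (F k \<Otimes>\<^sub>M G) (Em x y) \<le> K * (1+\<epsilon>)^Suc k * g (x + y)"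
          using AK eps gz by (simp add: PP.emeasure_eq_measure ennreal_le_iff)
        then have r: "measure (F k \<Otimes>\<^sub>M G) (Em x y) / g (x + y) \<le> K * (1+\<epsilon>)^Suc k"
          using gz by (simp add: divide_le_eq)
        have "norm (a k (x, y)) = pt k * (measure (F k \<Otimes>\<^sub>M G) (Em x y) / g (x + y))"
          unfolding a_def using pt_nonneg[of k] gz by simp
        also have "\<dots> \<le> pt k * (K * (1+\<epsilon>)^Suc k)" using r pt_nonneg[of k] by (rule mult_left_mono)
        finally show "norm (a k (x, y)) \<le> Mb k" by (simp add: Mb_def mult_ac)
      qed
    qed
    then have "eventually (\<lambda>p. True \<and> (\<forall>k. norm (a k (snd p)) \<le> Mb k)) (at_top \<times>\<^sub>F (at_top \<times>\<^sub>F at_top))"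
      by (intro eventually_prodI) auto
    then show ?thesis by eventually_elim auto
  qed
  have sM: "summable Mb"
    unfolding Mb_def using pt_summable_exp[OF d int, of "1 + \<epsilon>"] eps by (intro summable_mult2) auto
  have nb: "(at_top \<times>\<^sub>F at_top :: (real \<times> real) filter) \<noteq> bot" by (simp add: prod_filter_eq_bot)
  have T: "((\<lambda>n. \<Sum>k. a k n) \<longlongrightarrow> suminf pt) (at_top \<times>\<^sub>F at_top)"
    using tannerys_theorem[OF lim bound sM nb] by blast
  have eq: "eventually (\<lambda>n. (\<Sum>k. a k n) = (\<lambda>(x, y). measure M {\<omega> \<in> space M. (\<exists>n. 1 \<le> n \<and> x < S n \<omega>) \<and>
              first_passage \<zeta> x \<omega> \<le> \<tau> \<omega> \<and> overshoot \<zeta> x \<omega> \<in> SI y} / g (x + y)) n) (at_top \<times>\<^sub>F at_top)"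
  proof (rule ev_prod)
    fix x y :: real assume "0 \<le> x" "0 \<le> y"
    from event_sums[OF this] show "(\<Sum>k. a k (x, y)) = (\<lambda>(x, y). measure M {\<omega> \<in> space M. (\<exists>n. 1 \<le> n \<and> x < S n \<omega>) \<and>
              first_passage \<zeta> x \<omega> \<le> \<tau> \<omega> \<and> overshoot \<zeta> x \<omega> \<in> SI y} / g (x + y)) (x, y)"
      unfolding a_def by (simp add: sums_iff suminf_divide)
  qed
  show ?thesis
    using tendsto_cong[OF eq] T expect_tau(2)[OF d int] by simp
qed

end

theorem corollary3:
  fixes M :: "'a measure" and T :: ereal and G :: "real measure"
    and \<zeta> :: "nat \<Rightarrow> 'a \<Rightarrow> real" and \<tau> :: "'a \<Rightarrow> nat" and \<delta> :: real
  assumes "prob_space M"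
    and "0 < T"
    and "S_Delta T G"
    and "\<And>i. \<zeta> i \<in> borel_measurable M"
    and "\<And>i \<omega>. 0 \<le> \<zeta> i \<omega>"
    and "prob_space.indep_vars M (\<lambda>_. borel) \<zeta> UNIV"
    and "\<And>i. distr M borel (\<zeta> i) = G"
    and "\<tau> \<in> measurable M (count_space UNIV)"
    and "prob_space.indep_vars M (\<lambda>_. borel)
           (\<lambda>j \<omega>. case j of None \<Rightarrow> real (\<tau> \<omega>) | Some i \<Rightarrow> \<zeta> i \<omega>) UNIV"
    and "\<delta> > 0"
    and "integrable M (\<lambda>\<omega>. (1 + \<delta>) ^ \<tau> \<omega>)"
  shows "((\<lambda>(x, y). measure M {\<omega> \<in> space M.
              (\<exists>n. 1 \<le> n \<and> x < psum \<zeta> n \<omega>) \<and>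
              first_passage \<zeta> x \<omega> \<le> \<tau> \<omega> \<and>
              overshoot \<zeta> x \<omega> \<in> shift_int y T}
            / measure G (shift_int (x + y) T))
          \<longlongrightarrow> prob_space.expectation M (\<lambda>\<omega>. real (\<tau> \<omega>)))
         (at_top \<times>\<^sub>F at_top)"
proof -
  interpret walk T G M \<zeta> \<tau>
    by (intro walk.intro sdelta.intro walk_axioms.intro) (fact assms)+
  show ?thesis
    using main_limit[OF assms(10,11)] unfolding g_def by simp
qed

end
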